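(* Consider the VRD$^2$ algorithm with constant step-size $\mu>0$, as defined in the context, under the standing assumptions listed there. There exists $\bar\mu>0$ such that for every $0<\mu\le\bar\mu$ there is a constant $C<\infty$ (independent of $i$) with $$\mathbb{E}\,\|w_{i,k}-w^\star_k\|^2\le\rho^iC\qquad\text{for all agents }k\text{ and all }i>0,$$ where $w^\star=\mathrm{col}\{w^\star_1,\dots,w^\star_K\}$ is the minimizer of $R$ and $$\rho=\max\Big(1-\frac{1-\lambda}{2N},\;1-\frac{\mu\nu}{4}\Big).$$
   Context: Data and risk. There are $N$ data pairs $(h_n,\gamma_n)$, $n=1,\dots,N$, with $h_n\in\mathbb{R}^M$ and scalar labels $\gamma_n$. The feature vector and the parameter are partitioned into $K$ blocks, $h_n=\mathrm{col}\{h_{n,1},\dots,h_{n,K}\}$, $w=\mathrm{col}\{w_1,\dots,w_K\}$ with $h_{n,k},w_k\in\mathbb{R}^{M_k}$, $\sum_k M_k=M$; block $k$ is held by agent $k$. The empirical risk is $$R(w)=\frac1N\sum_{n=1}^N Q\Big(\sum_{k=1}^K h_{n,k}^{\mathsf T}w_k;\gamma_n\Big)+\sum_{k=1}^K r_k(w_k),$$ where $Q(\cdot;\gamma):\mathbb{R}\to\mathbb{R}$ is differentiable with derivative $\nabla_z Q(z;\gamma)$, and $r(w)=\sum_k r_k(w_k)$. Assumptions. (i) For every $n$, the map $w\mapsto Q(h_n^{\mathsf T}w;\gamma_n)$ has $L$-Lipschitz gradient, i.e. $\|\nabla_zQ(h_n^{\mathsf T}w_1;\gamma_n)h_n-\nabla_zQ(h_n^{\mathsf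 T}w_2;\gamma_n)h_n\|\le L\|w_1-w_2\|$, and $|\nabla_zQ(z_1;\gamma_n)-\nabla_zQ(z_2;\gamma_n)|\le\delta|z_1-z_2|$ for all $z_1,z_2$, with $L,\delta>0$. (ii) $r$ is convex with $\eta$-Lipschitz gradient. (iii) $R$ is $\nu$-strongly convex: $(\nabla R(w_1)-\nabla R(w_2))^{\mathsf T}(w_1-w_2)\ge\nu\|w_1-w_2\|^2$; $w^\star$ denotes its unique minimizer. (iv) Agents communicate over a strongly connected graph with combination matrix $A=[a_{\ell k}]\in\mathbb{R}^{K\times K}$, nonnegative, with $a_{\ell k}>0$ only if $\ell=k$ or $\ell$ is a neighbor of $k$ ($\ell\in\mathcal N_k$, where $\mathcal N_k$ includes $k$), $A=A^{\mathsf T}$, $A\mathbf 1_K=\mathbf 1_K$, and $a_{kk}>0$ for at least one $k$. $\lambda\in(0,1)$ denotes the second largest magnitude of the eigenvalues of $A$. VRD$^2$ algorithm (variance-reduced dynamic diffusion). Each agent $k$ stores $w_{i,k}$ and scalar tables $u^i_{n,k},v^i_{n,k}$, $n=1,\dots,N$, initialized $w_{1,k}=0$, $u^1_{n,k}=v^1_{n,k}=0$. At each iteration $i=1,2,\dots$ an index $n_i$ is drawn uniformly from $\{1,\dots,N\}$, independently of the past, and the same $n_i$ is used by all agents. Agent $k$ computes $$z_{n_i,k}=\sum_{\ell\in\mathcal N_k}a_{\ell k}\big(u^i_{n_i,\ell}+Kh_{n_i,\ell}^{\mathsf T}w_{i,\ell}-v^i_{n_i,\ell}\big),$$ $$w_{i+1,k}=w_{i,k}-\mu\Big\{\big[\nabla_zQ(z_{n_i,k};\gamma_{n_i})-\nabla_zQ(u^i_{n_i,k};\gamma_{n_i})\big]h_{n_i,k}+\frac1N\sum_{n=1}^N\nabla_zQ(u^i_{n,k};\gamma_n)h_{n,k}+\nabla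 r_k(w_{i,k})\Big\},$$ then sets $u^{i+1}_{n_i,k}=z_{n_i,k}$, $v^{i+1}_{n_i,k}=Kh_{n_i,k}^{\mathsf T}w_{i,k}$, and $u^{i+1}_{n,k}=u^i_{n,k}$, $v^{i+1}_{n,k}=v^i_{n,k}$ for $n\ne n_i$. (This is the PVRD$^2$ algorithm with pipeline depth $J=1$.) *)

theory Defs
  imports "HOL-Analysis.Analysis" "HOL-Library.Multiset"
begin

text \<open>Agents are indexed by a finite type 'k (K = CARD('k)); coordinates of
  R^M by a finite type 'm; blk j is the agent owning coordinate j.
  Data points are indexed by n < N.\<close>

definition eigvals :: "real^'k^'k \<Rightarrow> real set" where
  "eigvals A = {\<mu>. \<exists>x. x \<noteq> 0 \<and> A *v x = \<mu> *s x}"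

text \<open>Eigenvalues with multiplicity (for symmetric matrices the geometric
  multiplicity equals the algebraic one).\<close>
definition eig_mset :: "real^'k^'k \<Rightarrow> real multiset" where
  "eig_mset A = (\<Sum>\<mu>\<in>eigvals A. replicate_mset (dim {x. A *v x = \<mu> *s x}) \<mu>)"

definition second_largest_abs_eig :: "real^'k^'k \<Rightarrow> real" where
  "second_largest_abs_eig A =
     (let l = rev (sorted_list_of_multiset (image_mset abs (eig_mset A)))
      in if length l < 2 then 0 else l ! 1)"

definition blk_inner :: "('m::finite \<Rightarrow> 'k) \<Rightarrow> 'k \<Rightarrow> real^'m \<Rightarrow> real^'m \<Rightarrow> real" where
  "blk_inner blk k h w = (\<Sum>j\<in>{j. blk j = k}. h$j * w$j)"

definition blk_sqnorm :: "('m::finite \<Rightarrow> 'k) \<Rightarrow> 'k \<Rightarrow> real^'m \<Rightarrow> real" where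
  "blk_sqnorm blk k w = (\<Sum>j\<in>{j. blk j = k}. (w$j)^2)"

text \<open>State: (w, u, v) with w the stacked iterate (block k held by agent k),
  u n k = u_{n,k}, v n k = v_{n,k}.\<close>
type_synonym ('m,'k) vrd_state = "(real^'m) \<times> (nat \<Rightarrow> 'k \<Rightarrow> real) \<times> (nat \<Rightarrow> 'k \<Rightarrow> real)"

definition vrd_z ::
  "real^'k^'k \<Rightarrow> ('k \<Rightarrow> 'k \<Rightarrow> bool) \<Rightarrow> ('m::finite \<Rightarrow> 'k::finite) \<Rightarrow> (nat \<Rightarrow> real^'m)
   \<Rightarrow> nat \<Rightarrow> ('m,'k) vrd_state \<Rightarrow> 'k \<Rightarrow> real" where
  "vrd_z A nbr blk h n st k =
     (case st of (w, u, v) \<Rightarrow>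
       (\<Sum>l\<in>{l. l = k \<or> nbr l k}.
          A$l$k * (u n l + real CARD('k) * blk_inner blk l (h n) w - v n l)))"

definition vrd_step ::
  "real^'k^'k \<Rightarrow> ('k \<Rightarrow> 'k \<Rightarrow> bool) \<Rightarrow> ('m::finite \<Rightarrow> 'k::finite) \<Rightarrow> nat
   \<Rightarrow> (nat \<Rightarrow> real^'m) \<Rightarrow> (nat \<Rightarrow> real) \<Rightarrow> (real \<Rightarrow> real \<Rightarrow> real)
   \<Rightarrow> ('k \<Rightarrow> real^'m \<Rightarrow> real^'m) \<Rightarrow> real
   \<Rightarrow> ('m,'k) vrd_state \<Rightarrow> nat \<Rightarrow> ('m,'k) vrd_state" where
  "vrd_step A nbr blk N h \<gamma> dQ gr \<mu> st n =
     (case st of (w, u, v) \<Rightarrow>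
       (let z = vrd_z A nbr blk h n st in
        ((\<chi> j. w$j - \<mu> * ((dQ (z (blk j)) (\<gamma> n) - dQ (u n (blk j)) (\<gamma> n)) * (h n)$j
                         + (1 / real N) * (\<Sum>m<N. dQ (u m (blk j)) (\<gamma> m) * (h m)$j)
                         + (gr (blk j) w)$j)),
         u(n := z),
         v(n := (\<lambda>k. real CARD('k) * blk_inner blk k (h n) w)))))"

text \<open>State after processing the sampled indices xs = [n_1, ..., n_{i-1}],
  starting from w_1 = 0, u^1 = v^1 = 0; its first component is w_i.\<close>
definition vrd_run ::
  "real^'k^'k \<Rightarrow> ('k \<Rightarrow> 'k \<Rightarrow> bool) \<Rightarrow> ('m::finite \<Rightarrow> 'k::finite) \<Rightarrow> nat
   \<Rightarrow> (nat \<Rightarrow> real^'m) \<Rightarrow> (nat \<Rightarrow> real) \<Rightarrow> (real \<Rightarrow> real \<Rightarrow> real)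
   \<Rightarrow> ('k \<Rightarrow> real^'m \<Rightarrow> real^'m) \<Rightarrow> real \<Rightarrow> nat list \<Rightarrow> ('m,'k) vrd_state" where
  "vrd_run A nbr blk N h \<gamma> dQ gr \<mu> xs =
     foldl (vrd_step A nbr blk N h \<gamma> dQ gr \<mu>) (0, (\<lambda>_ _. 0), (\<lambda>_ _. 0)) xs"

text \<open>E ||w_{i,k} - w*_k||^2 where n_1,...,n_{i-1} are i.i.d. uniform on {0..<N}:
  the exact average over all N^(i-1) equally likely index sequences.\<close>
definition vrd_msd ::
  "real^'k^'k \<Rightarrow> ('k \<Rightarrow> 'k \<Rightarrow> bool) \<Rightarrow> ('m::finite \<Rightarrow> 'k::finite) \<Rightarrow> nat
   \<Rightarrow> (nat \<Rightarrow> real^'m) \<Rightarrow> (nat \<Rightarrow> real) \<Rightarrow> (real \<Rightarrow> real \<Rightarrow> real)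
   \<Rightarrow> ('k \<Rightarrow> real^'m \<Rightarrow> real^'m) \<Rightarrow> real \<Rightarrow> real^'m \<Rightarrow> nat \<Rightarrow> 'k \<Rightarrow> real" where
  "vrd_msd A nbr blk N h \<gamma> dQ gr \<mu> wstar i k =
     (\<Sum>xs\<in>{xs. length xs = i - 1 \<and> set xs \<subseteq> {..<N}}.
        blk_sqnorm blk k (fst (vrd_run A nbr blk N h \<gamma> dQ gr \<mu> xs) - wstar))
     / real N ^ (i - 1)"

definition emp_risk ::
  "nat \<Rightarrow> (nat \<Rightarrow> real^'m::finite) \<Rightarrow> (nat \<Rightarrow> real) \<Rightarrow> (real \<Rightarrow> real \<Rightarrow> real)
   \<Rightarrow> ('k::finite \<Rightarrow> real^'m \<Rightarrow> real) \<Rightarrow> real^'m \<Rightarrow> real" where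
  "emp_risk N h \<gamma> Q r w = (1 / real N) * (\<Sum>n<N. Q (h n \<bullet> w) (\<gamma> n)) + (\<Sum>k\<in>UNIV. r k w)"

definition emp_risk_grad ::
  "nat \<Rightarrow> (nat \<Rightarrow> real^'m::finite) \<Rightarrow> (nat \<Rightarrow> real) \<Rightarrow> (real \<Rightarrow> real \<Rightarrow> real)
   \<Rightarrow> ('k::finite \<Rightarrow> real^'m \<Rightarrow> real^'m) \<Rightarrow> real^'m \<Rightarrow> real^'m" where
  "emp_risk_grad N h \<gamma> dQ gr w =
     (1 / real N) *\<^sub>R (\<Sum>n<N. dQ (h n \<bullet> w) (\<gamma> n) *\<^sub>R h n) + (\<Sum>k\<in>UNIV. gr k w)"

end

theory Submission
  imports Defs
begin


lemma smult_scaleR: "(c::real) *s (x::real^'n) = c *\<^sub>R x"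
  by (simp add: vec_eq_iff)

lemma sym_dot:
  assumes "transpose A = A"
  shows "((A::real^'k^'k) *v x) \<bullet> y = x \<bullet> (A *v y)"
proof -
  have "x v* A = A *v x" using vector_transpose_matrix[of x A] assms by simp
  then show ?thesis using dot_lmul_matrix[of x A y] by simp
qed

lemma eig_orth:
  assumes "transpose A = A" "(A::real^'k^'k) *v x = a *\<^sub>R x" "A *v y = b *\<^sub>R y" "a \<noteq> b"
  shows "x \<bullet> y = 0"
proof -
  have "a * (x \<bullet> y) = (A *v x) \<bullet> y" using assms(2) by simp
  also have "\<dots> = x \<bullet> (A *v y)" by (rule sym_dot[OF assms(1)])
  also have "\<dots> = b * (x \<bullet> y)" using assms(3) by simp
  finally show ?thesis using assms(4) by auto
qed

lemma eigvals_finite: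
  assumes "transpose A = A"
  shows "finite (eigvals (A::real^'k^'k))"
proof -
  define pk where "pk \<mu> = (SOME x. x \<noteq> 0 \<and> A *v x = \<mu> *s x)" for \<mu>
  have pk: "pk \<mu> \<noteq> 0 \<and> A *v pk \<mu> = \<mu> *\<^sub>R pk \<mu>" if "\<mu> \<in> eigvals A" for \<mu>
  proof -
    have "\<exists>x. x \<noteq> 0 \<and> A *v x = \<mu> *s x" using that unfolding eigvals_def by blast
    then have "pk \<mu> \<noteq> 0 \<and> A *v pk \<mu> = \<mu> *s pk \<mu>" unfolding pk_def by (rule someI_ex)
    then show ?thesis by (metis smult_scaleR)
  qed
  have inj: "inj_on pk (eigvals A)"
  proof (rule inj_onI)
    fix a b assume ab: "a \<in> eigvals A" "b \<in> eigvals A" "pk a = pk b"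
    then have "a *\<^sub>R pk a = b *\<^sub>R pk a" by (metis ab(3) pk[OF ab(1)] pk[OF ab(2)])
    then have "(a - b) *\<^sub>R pk a = 0" by (simp add: scaleR_diff_left)
    then show "a = b" using pk[OF ab(1)] by simp
  qed
  have "pairwise orthogonal (pk ` eigvals A)"
    unfolding pairwise_def
  proof (intro ballI impI)
    fix x y assume xy: "x \<in> pk ` eigvals A" "y \<in> pk ` eigvals A" "x \<noteq> y"
    then obtain a b where ab: "a \<in> eigvals A" "b \<in> eigvals A" "x = pk a" "y = pk b" by blast
    then have "a \<noteq> b" using xy(3) by blast
    show "orthogonal x y"
    proof -
      have "pk a \<bullet> pk b = 0"
        by (rule eig_orth[OF assms]) (use pk[OF ab(1)] pk[OF ab(2)] \<open>a \<noteq> b\<close> in auto)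
      then show ?thesis using ab(3,4) by (simp add: orthogonal_def)
    qed
  qed
  moreover have "0 \<notin> pk ` eigvals A"
  proof
    assume "0 \<in> pk ` eigvals A"
    then obtain a where "a \<in> eigvals A" "0 = pk a" by (auto simp del: )
    then show False using pk[of a] by simp
  qed
  ultimately have "independent (pk ` eigvals A)" by (rule pairwise_orthogonal_independent)
  then have "finite (pk ` eigvals A)" using independent_bound_general[of "pk ` eigvals A"] by simp
  then show ?thesis using finite_imageD[OF _ inj] by blast
qed

lemma count_eig_mset:
  assumes "transpose A = A" "\<mu> \<in> eigvals (A::real^'k^'k)"
  shows "count (eig_mset A) \<mu> = dim {x. A *v x = \<mu> *s x}"
proof -
  have "count (eig_mset A) \<mu> = (\<Sum>a\<in>eigvals A. count (replicate_mset (dim {x. A *v x = a *s x}) a) \<mu>)"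
    unfolding eig_mset_def by (rule count_sum)
  also have "\<dots> = (\<Sum>a\<in>eigvals A. if a = \<mu> then dim {x. A *v x = a *s x} else 0)"
    by (intro sum.cong) auto
  also have "\<dots> = dim {x. A *v x = \<mu> *s x}"
    using eigvals_finite[OF assms(1)] assms(2) by (simp add: sum.delta')
  finally show ?thesis .
qed

lemma second_ge:
  fixes M :: "real multiset"
  assumes "{#a, b#} \<subseteq># M" "a \<ge> t" "b \<ge> t"
  defines "l \<equiv> rev (sorted_list_of_multiset M)"
  shows "length l \<ge> 2 \<and> l ! 1 \<ge> t"
proof -
  have ml: "mset l = M" unfolding l_def by simp
  have srt: "sorted (rev l)" unfolding l_def by simp
  have "size {#a, b#} \<le> size M" using assms(1) by (rule size_mset_mono)
  moreover have "length l = size M" using ml by (metis size_mset)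
  ultimately have len: "length l \<ge> 2" by simp
  have fs: "{#a, b#} \<subseteq># filter_mset (\<lambda>x. x \<ge> t) M"
  proof -
    have "filter_mset (\<lambda>x. x \<ge> t) {#a, b#} = {#a, b#}" using assms(2,3) by simp
    then show ?thesis using multiset_filter_mono[OF assms(1), of "\<lambda>x. x \<ge> t"] by simp
  qed
  have "2 \<le> size (filter_mset (\<lambda>x. x \<ge> t) M)"
    using size_mset_mono[OF fs] by simp
  also have "\<dots> = length (filter (\<lambda>x. x \<ge> t) l)" using ml by (metis mset_filter size_mset)
  finally have f2: "2 \<le> length (filter (\<lambda>x. x \<ge> t) l)" .
  show ?thesis
  proof (rule ccontr)
    assume "\<not> ?thesis"
    then have lt: "l ! 1 < t" using len by auto
    have "{i. i < length l \<and> l ! i \<ge> t} \<subseteq> {0}"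
    proof
      fix i assume i: "i \<in> {i. i < length l \<and> l ! i \<ge> t}"
      show "i \<in> {0}"
      proof (rule ccontr)
        assume "i \<notin> {0}"
        then have "1 \<le> i" by auto
        then have "l ! i \<le> l ! 1" using sorted_rev_nth_mono[OF srt, of 1 i] i by auto
        then show False using i lt by auto
      qed
    qed
    then have "card {i. i < length l \<and> l ! i \<ge> t} \<le> card {0::nat}"
      by (intro card_mono) auto
    then have "card {i. i < length l \<and> l ! i \<ge> t} \<le> 1" by simp
    then show False using f2 length_filter_conv_card[of "\<lambda>x. x \<ge> t" l] by simp
  qed
qed


lemma eig_in:
  assumes "x \<noteq> 0" "(A::real^'k^'k) *v x = c *\<^sub>R x"
  shows "c \<in> eigvals A"
proof -
  have "c *s x = c *\<^sub>R x" by (rule smult_scaleR)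
  then have "x \<noteq> 0 \<and> A *v x = c *s x" using assms by simp
  then show ?thesis unfolding eigvals_def by blast
qed

lemma eig_space_in:
  assumes "(A::real^'k^'k) *v x = c *\<^sub>R x"
  shows "x \<in> {z. A *v z = c *s z}"
proof -
  have "c *s x = c *\<^sub>R x" by (rule smult_scaleR)
  then show ?thesis using assms by simp
qed

lemma quad_zero:
  fixes c q :: real
  assumes "\<And>t. 2 * t * c + t^2 * q \<le> 0"
  shows "c = 0"
proof -
  define a where "a = \<bar>q\<bar> + 1"
  have a0: "a > 0" unfolding a_def by simp
  have "2 * (c/a) * c + (c/a)^2 * q \<le> 0" by (rule assms)
  then have "(2 * (c/a) * c + (c/a)^2 * q) * a^2 \<le> 0"
    using a0 by (simp add: mult_nonpos_nonneg)
  moreover have "(2 * (c/a) * c + (c/a)^2 * q) * a^2 = c^2 * (2*a + q)"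
    using a0 by (simp add: field_simps power2_eq_square)
  ultimately have "c^2 * (2*a + q) \<le> 0" by simp
  moreover have "2*a + q > 0" unfolding a_def by (simp add: abs_if)
  ultimately have "c^2 \<le> 0" by (simp add: mult_le_0_iff)
  then show ?thesis by simp
qed

lemma consensus_contract:
  fixes A :: "real^'k^'k"
  assumes sym: "transpose A = A"
    and rows: "\<And>l. (\<Sum>k\<in>UNIV. A$l$k) = 1"
    and lamdef: "lam = second_largest_abs_eig A"
    and lam1: "lam < 1" and lam0: "0 < lam"
    and ysum: "(\<Sum>k\<in>UNIV. y$k) = 0"
  shows "norm (A *v y) \<le> lam * norm y"
proof (rule ccontr)
  assume neg: "\<not> norm (A *v y) \<le> lam * norm y"
  define one :: "real^'k" where "one = (\<chi> i. 1)"
  have A1: "A *v one = one"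
    unfolding one_def by (simp add: vec_eq_iff matrix_vector_mult_def rows)
  have one0: "one \<noteq> 0" unfolding one_def by (simp add: vec_eq_iff)
  define S where "S = {z::real^'k. one \<bullet> z = 0}"
  have S_sum: "z \<in> S \<longleftrightarrow> (\<Sum>k\<in>UNIV. z$k) = 0" for z
    unfolding S_def one_def by (simp add: inner_vec_def)
  have AS: "A *v z \<in> S" if "z \<in> S" for z
  proof -
    have "one \<bullet> (A *v z) = (A *v one) \<bullet> z" using sym_dot[OF sym, of one z] by simp
    then show ?thesis using that A1 unfolding S_def by simp
  qed
  have S_add: "z1 + z2 \<in> S" if "z1 \<in> S" "z2 \<in> S" for z1 z2
    using that unfolding S_def by (simp add: inner_add_right)
  have S_scale: "c *\<^sub>R z \<in> S" if "z \<in> S" for z c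
    using that unfolding S_def by simp
  have S_diff: "z1 - z2 \<in> S" if "z1 \<in> S" "z2 \<in> S" for z1 z2
    using that unfolding S_def by (simp add: inner_diff_right)
  have yS: "y \<in> S" using ysum S_sum by simp
  have y0: "y \<noteq> 0" using neg lam0 by auto
  define T where "T = S \<inter> sphere 0 1"
  have cT: "compact T" unfolding T_def S_def
    by (rule closed_Int_compact) (auto simp: closed_hyperplane compact_sphere)
  define f where "f z = (norm (A *v z))^2" for z
  have contf: "continuous_on T f" unfolding f_def
  proof -
    have "continuous_on T (\<lambda>z. A *v z)" using matrix_vector_mult_linear_continuous_on[of T A] by simp
    then show "continuous_on T (\<lambda>z. (norm (A *v z))^2)" by (intro continuous_intros)
  qed
  define y1 where "y1 = (1 / norm y) *\<^sub>R y"
  have y1T: "y1 \<in> T" unfolding T_def y1_def using yS y0 S_scale by auto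
  obtain ym where ymT: "ym \<in> T" and ymax: "\<And>z. z \<in> T \<Longrightarrow> f z \<le> f ym"
    using continuous_attains_sup[OF cT _ contf] y1T by blast
  define s2 where "s2 = f ym"
  have ymS: "ym \<in> S" and ym1: "norm ym = 1" using ymT unfolding T_def by auto
  have bound: "(norm (A *v z))^2 \<le> s2 * (norm z)^2" if "z \<in> S" for z
  proof (cases "z = 0")
    case True then show ?thesis by simp
  next
    case False
    define z1 where "z1 = (1 / norm z) *\<^sub>R z"
    have "z1 \<in> T" unfolding T_def z1_def using that False S_scale by auto
    then have "f z1 \<le> s2" using ymax s2_def by simp
    moreover have "f z1 = (norm (A *v z))^2 / (norm z)^2"
      unfolding f_def z1_def by (simp add: matrix_vector_mult_scaleR power_divide)
    ultimately show ?thesis using False by (simp add: divide_le_eq)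
  qed
  have s2lam: "s2 > lam^2"
  proof -
    have "lam * norm y < norm (A *v y)" using neg by simp
    then have "(lam * norm y)^2 < (norm (A *v y))^2"
      using lam0 by (intro power_strict_mono) auto
    moreover have "f y1 = (norm (A *v y))^2 / (norm y)^2"
      unfolding f_def y1_def by (simp add: matrix_vector_mult_scaleR power_divide)
    ultimately have "lam^2 * (norm y)^2 < f y1 * (norm y)^2" using y0 by (simp add: power_mult_distrib field_simps)
    moreover have "(norm y)^2 > 0" using y0 by simp
    ultimately have "f y1 > lam^2" using mult_less_cancel_right_pos[of "(norm y)^2" "lam^2" "f y1"] by simp
    then show ?thesis using ymax[OF y1T] s2_def by simp
  qed
  have s2ym: "(A *v ym) \<bullet> (A *v ym) = s2" unfolding s2_def f_def by (simp add: power2_norm_eq_inner)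
  have var: "(A *v ym) \<bullet> (A *v d) - s2 * (ym \<bullet> d) = 0" if "d \<in> S" for d
  proof (rule quad_zero)
    fix t :: real
    have "ym + t *\<^sub>R d \<in> S" using ymS that S_add S_scale by blast
    then have b: "(norm (A *v (ym + t *\<^sub>R d)))^2 \<le> s2 * (norm (ym + t *\<^sub>R d))^2" by (rule bound)
    have e1: "(norm (A *v (ym + t *\<^sub>R d)))^2 = s2 + 2 * t * ((A *v ym) \<bullet> (A *v d)) + t^2 * ((A *v d) \<bullet> (A *v d))"
    proof -
      have "A *v (ym + t *\<^sub>R d) = A *v ym + t *\<^sub>R (A *v d)"
        by (simp add: matrix_vector_right_distrib matrix_vector_mult_scaleR)
      then show ?thesis
        by (simp add: power2_norm_eq_inner inner_add_left inner_add_right s2ym inner_commute[of "A *v d" "A *v ym"])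
          (simp add: power2_eq_square algebra_simps)
    qed
    have e2: "(norm (ym + t *\<^sub>R d))^2 = 1 + 2 * t * (ym \<bullet> d) + t^2 * (d \<bullet> d)"
    proof -
      have "ym \<bullet> ym = 1" using ym1 by (simp add: norm_eq_1)
      then show ?thesis by (simp add: power2_norm_eq_inner inner_add_left inner_add_right
          inner_commute[of d ym]) (simp add: power2_eq_square algebra_simps)
    qed
    have "2 * t * ((A *v ym) \<bullet> (A *v d) - s2 * (ym \<bullet> d)) + t^2 * ((A *v d) \<bullet> (A *v d) - s2 * (d \<bullet> d))
        = (norm (A *v (ym + t *\<^sub>R d)))^2 - s2 * (norm (ym + t *\<^sub>R d))^2"
      unfolding e1 e2 by (simp add: algebra_simps)
    also have "\<dots> \<le> 0" using b by simp
    finally show "2 * t * ((A *v ym) \<bullet> (A *v d) - s2 * (ym \<bullet> d)) + t^2 * ((A *v d) \<bullet> (A *v d) - s2 * (d \<bullet> d)) \<le> 0" .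
  qed
  define r where "r = A *v (A *v ym) - s2 *\<^sub>R ym"
  have rS: "r \<in> S" unfolding r_def using AS ymS S_diff S_scale by blast
  have "r \<bullet> r = 0"
  proof -
    have "r \<bullet> r = (A *v (A *v ym)) \<bullet> r - s2 * (ym \<bullet> r)" unfolding r_def by (simp add: inner_diff_left)
    also have "(A *v (A *v ym)) \<bullet> r = (A *v ym) \<bullet> (A *v r)" by (rule sym_dot[OF sym])
    finally show ?thesis using var[OF rS] by simp
  qed
  then have r0: "A *v (A *v ym) = s2 *\<^sub>R ym" unfolding r_def by simp
  define s where "s = sqrt s2"
  have s2pos: "s2 > 0" using s2lam lam0 by (smt (verit) zero_less_power)
  have ss: "s * s = s2" unfolding s_def using s2pos by simp
  have slam: "s > lam"
  proof -
    have "sqrt (lam^2) < sqrt s2" using s2lam by (rule real_sqrt_less_mono)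
    then show ?thesis using lam0 unfolding s_def by simp
  qed
  have s0: "s > 0" using slam lam0 by simp
  obtain \<mu> x where xS: "x \<in> S" and x0: "x \<noteq> 0" and Ax: "A *v x = \<mu> *\<^sub>R x" and muabs: "\<bar>\<mu>\<bar> = s"
  proof (cases "A *v ym + s *\<^sub>R ym = 0")
    case True
    then have "A *v ym = (-s) *\<^sub>R ym" by (simp add: eq_neg_iff_add_eq_0)
    moreover have "ym \<noteq> 0" using ym1 by auto
    ultimately show ?thesis using that[of ym "-s"] ymS s0 by simp
  next
    case False
    define v where "v = A *v ym + s *\<^sub>R ym"
    have "A *v v = s2 *\<^sub>R ym + s *\<^sub>R (A *v ym)"
      unfolding v_def by (simp add: matrix_vector_right_distrib matrix_vector_mult_scaleR r0)
    also have "\<dots> = s *\<^sub>R v" unfolding v_def ss[symmetric] by (simp add: algebra_simps)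
    finally have "A *v v = s *\<^sub>R v" .
    moreover have "v \<in> S" unfolding v_def using AS ymS S_add S_scale by blast
    ultimately show ?thesis using that[of v s] False s0 unfolding v_def by simp
  qed
  have fin: "finite (eigvals A)" by (rule eigvals_finite[OF sym])
  have one_eig: "1 \<in> eigvals A" using A1 one0 eig_in[of one A 1] by simp
  have mu_eig: "\<mu> \<in> eigvals A" using Ax x0 eig_in[of x A \<mu>] by simp
  have dim1: "dim {z. A *v z = a *s z} \<ge> 1" if "z0 \<noteq> 0" "A *v z0 = a *\<^sub>R z0" for a z0
  proof (rule ccontr)
    assume "\<not> ?thesis"
    then have d0: "dim {z. A *v z = a *s z} = 0" unfolding not_le less_one .
    have "{z. A *v z = a *s z} \<subseteq> {0}" by (rule dim_eq_0[THEN iffD1, OF d0])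
    moreover have "z0 \<in> {z. A *v z = a *s z}" using that(2) by (rule eig_space_in)
    ultimately show False using that(1) by blast
  qed
  define M where "M = eig_mset A"
  have cM: "count M a = dim {z. A *v z = a *s z}" if "a \<in> eigvals A" for a
    unfolding M_def using count_eig_mset[OF sym that] .
  have sub: "{#\<bar>\<mu>\<bar>, 1#} \<subseteq># image_mset abs M"
  proof (cases "\<mu> = 1")
    case True
    have ox: "one \<bullet> x = 0" using xS unfolding S_def by simp
    have neq: "one \<noteq> x" using ox one0 by auto
    have "pairwise orthogonal {one, x}" using ox by (auto simp: pairwise_def orthogonal_def inner_commute)
    moreover have "0 \<notin> {one, x}" using one0 x0 by auto
    ultimately have ind: "independent {one, x}" by (rule pairwise_orthogonal_independent)
    have "one \<in> {z. A *v z = 1 *s z}" using A1 eig_space_in[of A one 1] by simp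
    moreover have "x \<in> {z. A *v z = 1 *s z}" using Ax True eig_space_in[of A x 1] by simp
    ultimately have "{one, x} \<subseteq> {z. A *v z = 1 *s z}" by blast
    then have "card {one, x} \<le> dim {z. A *v z = 1 *s z}" using ind by (rule independent_card_le_dim)
    then have "count M 1 \<ge> 2" using cM[OF one_eig] neq by simp
    then have "{#1, 1#} \<subseteq># M" by (simp add: subseteq_mset_def)
    then have "image_mset abs {#1, 1#} \<subseteq># image_mset abs M" by (rule image_mset_subseteq_mono)
    then show ?thesis using True by simp
  next
    case False
    have "count M \<mu> \<ge> 1" using cM[OF mu_eig] dim1[OF x0 Ax] by simp
    moreover have "count M 1 \<ge> 1" using cM[OF one_eig] dim1[OF one0, of 1] A1 by simp
    ultimately have "{#\<mu>, 1#} \<subseteq># M" using False by (simp add: subseteq_mset_def)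
    then have "image_mset abs {#\<mu>, 1#} \<subseteq># image_mset abs M" by (rule image_mset_subseteq_mono)
    then show ?thesis by simp
  qed
  have "length (rev (sorted_list_of_multiset (image_mset abs M))) \<ge> 2 \<and>
        rev (sorted_list_of_multiset (image_mset abs M)) ! 1 \<ge> min s 1"
    by (rule second_ge[OF sub]) (auto simp: muabs)
  then have "lam \<ge> min s 1"
    unfolding lamdef second_largest_abs_eig_def M_def Let_def by simp
  then show False using slam lam1 by linarith
qed




lemma norm2_vec: "(norm (x::real^'n))^2 = (\<Sum>j\<in>UNIV. (x$j)^2)"
  by (simp only: power2_norm_eq_inner inner_vec_def) (simp add: power2_eq_square)

lemma young: "(norm (x + y::'a::real_inner))^2 \<le> (1 + t) * (norm x)^2 + (1 + 1/t) * (norm y)^2"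
  if "t > 0" for t :: real
proof -
  have "(norm (x + y))^2 \<le> (norm x + norm y)^2"
    by (simp add: norm_triangle_ineq power_mono)
  also have "\<dots> \<le> (1 + t) * (norm x)^2 + (1 + 1/t) * (norm y)^2"
  proof -
    have "0 \<le> (t * norm x - norm y)^2 / t" using that by simp
    also have "(t * norm x - norm y)^2 / t = t * (norm x)^2 - 2 * norm x * norm y + (norm y)^2 / t"
      using that by (simp add: field_simps power2_eq_square)
    finally show ?thesis by (simp add: power2_eq_square algebra_simps add_divide_distrib)
  qed
  finally show ?thesis .
qed

lemma young_real: "(a + b)^2 \<le> (1 + t) * a^2 + (1 + 1/t) * b^2" if "t > 0" for a b t :: real
  using young[of t a b] that by simp

lemma blk_inner_diff: "blk_inner blk k h (x - y) = blk_inner blk k h x - blk_inner blk k h y"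
  unfolding blk_inner_def by (simp add: algebra_simps sum_subtractf)

lemma inner_blocks:
  fixes blk :: "'m::finite \<Rightarrow> 'k::finite"
  shows "h \<bullet> w = (\<Sum>k\<in>UNIV. blk_inner blk k h w)"
proof -
  have "h \<bullet> w = (\<Sum>j\<in>UNIV. h$j * w$j)" by (simp add: inner_vec_def)
  also have "\<dots> = (\<Sum>k\<in>UNIV. \<Sum>j\<in>{j\<in>UNIV. blk j = k}. h$j * w$j)"
    by (rule sum.group[symmetric]) auto
  finally show ?thesis unfolding blk_inner_def by simp
qed

lemma blk_inner_sq:
  fixes blk :: "'m::finite \<Rightarrow> 'k::finite"
  shows "(blk_inner blk k h d)^2 \<le> (norm h)^2 * (norm d)^2"
proof -
  have "(blk_inner blk k h d)^2 \<le> (\<Sum>j\<in>{j. blk j = k}. (h$j)^2) * (\<Sum>j\<in>{j. blk j = k}. (d$j)^2)"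
    unfolding blk_inner_def by (rule Cauchy_Schwarz_ineq_sum)
  also have "\<dots> \<le> (\<Sum>j\<in>UNIV. (h$j)^2) * (\<Sum>j\<in>UNIV. (d$j)^2)"
    by (intro mult_mono sum_mono2) (auto intro: sum_nonneg)
  finally show ?thesis by (simp add: norm2_vec)
qed

lemma blk_sqnorm_le:
  fixes blk :: "'m::finite \<Rightarrow> 'k::finite"
  shows "blk_sqnorm blk k d \<le> (norm d)^2"
  unfolding blk_sqnorm_def norm2_vec by (intro sum_mono2) auto

lemma gr_local:
  fixes r :: "'k \<Rightarrow> real^'m::finite \<Rightarrow> real" and blk :: "'m \<Rightarrow> 'k"
  assumes r_block: "\<And>k w w'. (\<And>j. blk j = k \<Longrightarrow> w$j = w'$j) \<Longrightarrow> r k w = r k w'"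
    and r_deriv: "\<And>k w. (r k has_derivative (\<lambda>x. gr k w \<bullet> x)) (at w)"
    and j: "blk j \<noteq> k"
  shows "gr k w $ j = 0"
proof -
  define e :: "real^'m" where "e = axis j 1"
  have d1: "((\<lambda>t::real. w + t *\<^sub>R e) has_derivative (\<lambda>t. t *\<^sub>R e)) (at 0)"
    by (auto intro!: derivative_eq_intros)
  have "((\<lambda>t::real. r k (w + t *\<^sub>R e)) has_derivative (\<lambda>t. gr k w \<bullet> (t *\<^sub>R e))) (at 0)"
    using has_derivative_compose[OF d1, of "r k" "\<lambda>x. gr k w \<bullet> x"] r_deriv by simp
  moreover have "(\<lambda>t::real. r k (w + t *\<^sub>R e)) = (\<lambda>t. r k w)"
  proof
    fix t :: real
    show "r k (w + t *\<^sub>R e) = r k w"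
      by (rule r_block) (use j in \<open>auto simp: e_def axis_def\<close>)
  qed
  ultimately have "((\<lambda>t::real. r k w) has_derivative (\<lambda>t. gr k w \<bullet> (t *\<^sub>R e))) (at 0)" by simp
  moreover have "((\<lambda>t::real. r k w) has_derivative (\<lambda>t. 0)) (at 0)" by (rule has_derivative_const)
  ultimately have "(\<lambda>t. gr k w \<bullet> (t *\<^sub>R e)) = (\<lambda>t::real. 0)" by (rule has_derivative_unique)
  then have "gr k w \<bullet> (1 *\<^sub>R e) = 0" by meson
  then show ?thesis by (simp add: e_def inner_axis)
qed

lemma gr_sum_local:
  fixes r :: "'k::finite \<Rightarrow> real^'m::finite \<Rightarrow> real" and blk :: "'m \<Rightarrow> 'k"
  assumes r_block: "\<And>k w w'. (\<And>j. blk j = k \<Longrightarrow> w$j = w'$j) \<Longrightarrow> r k w = r k w'"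
    and r_deriv: "\<And>k w. (r k has_derivative (\<lambda>x. gr k w \<bullet> x)) (at w)"
  shows "(\<Sum>k\<in>UNIV. gr k w) $ j = gr (blk j) w $ j"
proof -
  have "(\<Sum>k\<in>UNIV. gr k w) $ j = (\<Sum>k\<in>UNIV. gr k w $ j)" by (simp add: sum_component)
  also have "\<dots> = gr (blk j) w $ j"
  proof -
    have "(\<Sum>k\<in>UNIV. gr k w $ j) = gr (blk j) w $ j + (\<Sum>k\<in>UNIV - {blk j}. gr k w $ j)"
      by (rule sum.remove) auto
    moreover have "(\<Sum>k\<in>UNIV - {blk j}. gr k w $ j) = 0"
      by (rule sum.neutral) (auto intro: gr_local[OF r_block r_deriv])
    ultimately show ?thesis by simp
  qed
  finally show ?thesis .
qed




locale vrd =
  fixes N :: nat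
    and h :: "nat \<Rightarrow> real^'m::finite"
    and \<gamma> :: "nat \<Rightarrow> real"
    and blk :: "'m \<Rightarrow> 'k::finite"
    and Q dQ :: "real \<Rightarrow> real \<Rightarrow> real"
    and r :: "'k \<Rightarrow> real^'m \<Rightarrow> real"
    and gr :: "'k \<Rightarrow> real^'m \<Rightarrow> real^'m"
    and A :: "real^'k^'k"
    and nbr :: "'k \<Rightarrow> 'k \<Rightarrow> bool"
    and L \<delta> \<eta> \<nu> lam :: real
    and wstar :: "real^'m"
  assumes N_pos: "N \<ge> 1"
    and Q_deriv: "\<And>z g. ((\<lambda>x. Q x g) has_real_derivative dQ z g) (at z)"
    and L_pos: "L > 0" and delta_pos: "\<delta> > 0"
    and Q_lip: "\<And>n w1 w2. n < N \<Longrightarrow>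
        norm (dQ (h n \<bullet> w1) (\<gamma> n) *\<^sub>R h n - dQ (h n \<bullet> w2) (\<gamma> n) *\<^sub>R h n) \<le> L * norm (w1 - w2)"
    and dQ_lip: "\<And>n z1 z2. n < N \<Longrightarrow> \<bar>dQ z1 (\<gamma> n) - dQ z2 (\<gamma> n)\<bar> \<le> \<delta> * \<bar>z1 - z2\<bar>"
    and r_block: "\<And>k w w'. (\<And>j. blk j = k \<Longrightarrow> w$j = w'$j) \<Longrightarrow> r k w = r k w'"
    and r_deriv: "\<And>k w. (r k has_derivative (\<lambda>x. gr k w \<bullet> x)) (at w)"
    and r_lip: "\<And>w1 w2. norm ((\<Sum>k\<in>UNIV. gr k w1) - (\<Sum>k\<in>UNIV. gr k w2)) \<le> \<eta> * norm (w1 - w2)"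
    and nu_pos: "\<nu> > 0"
    and R_strong: "\<And>w1 w2. (emp_risk_grad N h \<gamma> dQ gr w1 - emp_risk_grad N h \<gamma> dQ gr w2) \<bullet> (w1 - w2)
                      \<ge> \<nu> * (norm (w1 - w2))^2"
    and wstar_min: "\<And>w. emp_risk N h \<gamma> Q r wstar \<le> emp_risk N h \<gamma> Q r w"
    and A_nonneg: "\<And>l k. A$l$k \<ge> 0"
    and A_support: "\<And>l k. A$l$k > 0 \<Longrightarrow> l = k \<or> nbr l k"
    and A_sym: "transpose A = A"
    and A_stoch: "\<And>l. (\<Sum>k\<in>UNIV. A$l$k) = 1"
    and lambda_def: "lam = second_largest_abs_eig A"
    and lambda_range: "0 < lam" "lam < 1"
begin

abbreviation "gradR \<equiv> emp_risk_grad N h \<gamma> dQ gr"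
abbreviation "bi \<equiv> blk_inner blk"

lemma Npos: "real N > 0" using N_pos by simp

lemma eta_nonneg: "\<eta> \<ge> 0"
proof -
  define x :: "real^'m" where "x = vec 1"
  have x0: "x \<noteq> 0" unfolding x_def by (simp add: vec_eq_iff)
  have "norm ((\<Sum>k\<in>UNIV. gr k x) - (\<Sum>k\<in>UNIV. gr k 0)) \<le> \<eta> * norm (x - 0)"
    by (rule r_lip)
  then have "0 \<le> \<eta> * norm x" by (smt (verit) diff_zero norm_ge_zero)
  moreover have "norm x > 0" using x0 by simp
  ultimately show ?thesis by (simp add: zero_le_mult_iff)
qed

lemma gradR_lip: "norm (gradR w1 - gradR w2) \<le> (L + \<eta>) * norm (w1 - w2)"
proof -
  have "gradR w1 - gradR w2 = (1 / real N) *\<^sub>R (\<Sum>n<N. dQ (h n \<bullet> w1) (\<gamma> n) *\<^sub>R h n - dQ (h n \<bullet> w2) (\<gamma> n) *\<^sub>R h n)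
        + ((\<Sum>k\<in>UNIV. gr k w1) - (\<Sum>k\<in>UNIV. gr k w2))"
    unfolding emp_risk_grad_def by (simp add: sum_subtractf algebra_simps)
  also have "norm \<dots> \<le> norm ((1 / real N) *\<^sub>R (\<Sum>n<N. dQ (h n \<bullet> w1) (\<gamma> n) *\<^sub>R h n - dQ (h n \<bullet> w2) (\<gamma> n) *\<^sub>R h n))
        + \<eta> * norm (w1 - w2)"
    using r_lip[of w1 w2] norm_triangle_ineq by (smt (verit))
  also have "norm ((1 / real N) *\<^sub>R (\<Sum>n<N. dQ (h n \<bullet> w1) (\<gamma> n) *\<^sub>R h n - dQ (h n \<bullet> w2) (\<gamma> n) *\<^sub>R h n))
      \<le> (1 / real N) * (\<Sum>n<N. L * norm (w1 - w2))"
  proof -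
    have "norm (\<Sum>n<N. dQ (h n \<bullet> w1) (\<gamma> n) *\<^sub>R h n - dQ (h n \<bullet> w2) (\<gamma> n) *\<^sub>R h n)
        \<le> (\<Sum>n<N. L * norm (w1 - w2))"
      by (rule order_trans[OF norm_sum sum_mono]) (use Q_lip in auto)
    then show ?thesis using Npos by (simp add: pos_divide_le_eq mult.commute)
  qed
  also have "(1 / real N) * (\<Sum>n<N. L * norm (w1 - w2)) = L * norm (w1 - w2)" using Npos by simp
  finally show ?thesis by (simp add: algebra_simps)
qed

lemma emp_risk_deriv: "(emp_risk N h \<gamma> Q r has_derivative (\<lambda>x. gradR w \<bullet> x)) (at w)"
proof -
  have dQn: "((\<lambda>w. Q (h n \<bullet> w) (\<gamma> n)) has_derivative (\<lambda>x. dQ (h n \<bullet> w) (\<gamma> n) * (h n \<bullet> x))) (at w)" for n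
  proof -
    have d1: "((\<lambda>w. h n \<bullet> w) has_derivative (\<lambda>x. h n \<bullet> x)) (at w)"
      by (rule bounded_linear.has_derivative[OF bounded_linear_inner_right has_derivative_ident])
    have d2: "((\<lambda>x. Q x (\<gamma> n)) has_derivative (\<lambda>x. dQ (h n \<bullet> w) (\<gamma> n) * x)) (at (h n \<bullet> w))"
      using Q_deriv[where z = "h n \<bullet> w" and g = "\<gamma> n"] by (simp add: has_field_derivative_def)
    show ?thesis using has_derivative_compose[OF d1 d2] by simp
  qed
  have "((\<lambda>w. (1 / real N) * (\<Sum>n<N. Q (h n \<bullet> w) (\<gamma> n)) + (\<Sum>k\<in>UNIV. r k w)) has_derivative
      (\<lambda>x. (1 / real N) * (\<Sum>n<N. dQ (h n \<bullet> w) (\<gamma> n) * (h n \<bullet> x)) + (\<Sum>k\<in>UNIV. gr k w \<bullet> x))) (at w)"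
    by (intro has_derivative_add has_derivative_mult_right has_derivative_sum dQn r_deriv)
  moreover have "(\<lambda>x. (1 / real N) * (\<Sum>n<N. dQ (h n \<bullet> w) (\<gamma> n) * (h n \<bullet> x)) + (\<Sum>k\<in>UNIV. gr k w \<bullet> x))
      = (\<lambda>x. gradR w \<bullet> x)"
    unfolding emp_risk_grad_def by (simp add: inner_add_left inner_sum_left)
  ultimately show ?thesis unfolding emp_risk_def by simp
qed

lemma grad_wstar: "gradR wstar = 0"
proof -
  have "(\<lambda>x. gradR wstar \<bullet> x) = (\<lambda>h. 0)"
    by (rule has_derivative_local_min[OF emp_risk_deriv]) (simp add: wstar_min always_eventually)
  then have "gradR wstar \<bullet> gradR wstar = 0" by meson
  then show ?thesis by simp
qed

lemma grad_bound: "norm (gradR w) \<le> (L + \<eta>) * norm (w - wstar)"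
  using gradR_lip[of w wstar] grad_wstar by simp

lemma gd_contract:
  "(norm (w - wstar - \<mu> *\<^sub>R gradR w))^2 \<le> (1 - 2 * \<mu> * \<nu> + \<mu>^2 * (L + \<eta>)^2) * (norm (w - wstar))^2"
  if "\<mu> \<ge> 0"
proof -
  let ?d = "w - wstar" and ?g = "gradR w"
  have sc: "?g \<bullet> ?d \<ge> \<nu> * (norm ?d)^2" using R_strong[of w wstar] grad_wstar by simp
  have gb: "(norm ?g)^2 \<le> (L + \<eta>)^2 * (norm ?d)^2"
    using grad_bound[of w] by (metis norm_ge_zero power_mono power_mult_distrib)
  have "(norm (?d - \<mu> *\<^sub>R ?g))^2 = (?d - \<mu> *\<^sub>R ?g) \<bullet> (?d - \<mu> *\<^sub>R ?g)"
    by (simp only: power2_norm_eq_inner)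
  also have "\<dots> = ?d \<bullet> ?d - 2 * \<mu> * (?g \<bullet> ?d) + \<mu>^2 * (?g \<bullet> ?g)"
    by (simp add: inner_diff_left inner_diff_right inner_commute algebra_simps power2_eq_square)
  also have "\<dots> = (norm ?d)^2 - 2 * \<mu> * (?g \<bullet> ?d) + \<mu>^2 * (norm ?g)^2"
    by (simp only: power2_norm_eq_inner)
  finally have eq: "(norm (?d - \<mu> *\<^sub>R ?g))^2 = (norm ?d)^2 - 2 * \<mu> * (?g \<bullet> ?d) + \<mu>^2 * (norm ?g)^2" .
  have "(norm (w - wstar - \<mu> *\<^sub>R ?g))^2 = (norm ?d)^2 - 2 * \<mu> * (?g \<bullet> ?d) + \<mu>^2 * (norm ?g)^2"
    using eq by simp
  also have "\<dots> \<le> (norm ?d)^2 - 2 * \<mu> * (\<nu> * (norm ?d)^2) + \<mu>^2 * ((L + \<eta>)^2 * (norm ?d)^2)"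
    using sc gb that by (intro add_mono diff_mono mult_left_mono) auto
  finally show ?thesis by (simp add: algebra_simps)
qed

end



context vrd begin

definition astep :: "real \<Rightarrow> ('m,'k) vrd_state \<times> (nat \<Rightarrow> real^'m) \<Rightarrow> nat \<Rightarrow> ('m,'k) vrd_state \<times> (nat \<Rightarrow> real^'m)" where
  "astep \<mu> S n = (vrd_step A nbr blk N h \<gamma> dQ gr \<mu> (fst S) n, (snd S)(n := fst (fst S)))"

definition S0 :: "('m,'k) vrd_state \<times> (nat \<Rightarrow> real^'m)" where
  "S0 = ((0, (\<lambda>_ _. 0), (\<lambda>_ _. 0)), (\<lambda>_. 0))"

definition arun :: "real \<Rightarrow> nat list \<Rightarrow> ('m,'k) vrd_state \<times> (nat \<Rightarrow> real^'m)" where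
  "arun \<mu> xs = foldl (astep \<mu>) S0 xs"

lemma foldl_astep_fst: "fst (foldl (astep \<mu>) S xs) = foldl (vrd_step A nbr blk N h \<gamma> dQ gr \<mu>) (fst S) xs"
  by (induction xs arbitrary: S) (auto simp: astep_def)

lemma arun_fst: "fst (fst (arun \<mu> xs)) = fst (vrd_run A nbr blk N h \<gamma> dQ gr \<mu> xs)"
  unfolding arun_def vrd_run_def using foldl_astep_fst[of \<mu> S0 xs] by (simp add: S0_def)

definition wS :: "('m,'k) vrd_state \<times> (nat \<Rightarrow> real^'m) \<Rightarrow> real^'m" where "wS S = fst (fst S)"
definition uS :: "('m,'k) vrd_state \<times> (nat \<Rightarrow> real^'m) \<Rightarrow> nat \<Rightarrow> 'k \<Rightarrow> real" where "uS S = fst (snd (fst S))"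
definition vS :: "('m,'k) vrd_state \<times> (nat \<Rightarrow> real^'m) \<Rightarrow> nat \<Rightarrow> 'k \<Rightarrow> real" where "vS S = snd (snd (fst S))"
definition phS :: "('m,'k) vrd_state \<times> (nat \<Rightarrow> real^'m) \<Rightarrow> nat \<Rightarrow> real^'m" where "phS S = snd S"

definition xv where "xv S n l = uS S n l + real CARD('k) * bi l (h n) (wS S) - vS S n l"
definition zv where "zv S n k = vrd_z A nbr blk h n (fst S) k"
definition gv :: "('m,'k) vrd_state \<times> (nat \<Rightarrow> real^'m) \<Rightarrow> nat \<Rightarrow> real^'m" where
  "gv S n = (\<chi> j. (dQ (zv S n (blk j)) (\<gamma> n) - dQ (uS S n (blk j)) (\<gamma> n)) * (h n)$j
                         + (1 / real N) * (\<Sum>m<N. dQ (uS S m (blk j)) (\<gamma> m) * (h m)$j)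
                         + (gr (blk j) (wS S))$j)"

lemma fst_S_eq: "fst S = (wS S, uS S, vS S)"
  by (simp add: wS_def uS_def vS_def)

lemma A_zero: "\<not> (l = k \<or> nbr l k) \<Longrightarrow> A$l$k = 0"
  using A_nonneg[of l k] A_support[of l k] by linarith

lemma zv_eq: "zv S n k = (\<Sum>l\<in>UNIV. A$l$k * xv S n l)"
proof -
  have "zv S n k = (\<Sum>l\<in>{l. l = k \<or> nbr l k}. A$l$k * xv S n l)"
    unfolding zv_def vrd_z_def xv_def by (subst fst_S_eq) simp
  also have "\<dots> = (\<Sum>l\<in>UNIV. A$l$k * xv S n l)"
    by (rule sum.mono_neutral_left) (auto simp: A_zero)
  finally show ?thesis .
qed

lemma A_symm: "A$l$k = A$k$l"
  using A_sym by (metis transpose_def vec_lambda_beta)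

lemma A_col: "(\<Sum>l\<in>UNIV. A$l$k) = 1"
  using A_stoch[of k] by (simp add: A_symm)

lemma astep_w: "wS (astep \<mu> S n) = wS S - \<mu> *\<^sub>R gv S n"
  unfolding astep_def vrd_step_def
  by (subst fst_S_eq) (simp add: wS_def gv_def zv_def Let_def vec_eq_iff algebra_simps fst_S_eq[symmetric])

lemma astep_u: "uS (astep \<mu> S n) = (uS S)(n := zv S n)"
  unfolding astep_def vrd_step_def
  by (subst fst_S_eq) (simp add: uS_def zv_def Let_def fst_S_eq[symmetric] fun_eq_iff)

lemma astep_v: "vS (astep \<mu> S n) = (vS S)(n := (\<lambda>k. real CARD('k) * bi k (h n) (wS S)))"
  unfolding astep_def vrd_step_def
  by (subst fst_S_eq) (simp add: vS_def Let_def)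

lemma astep_ph: "phS (astep \<mu> S n) = (phS S)(n := wS S)"
  unfolding astep_def by (simp add: phS_def wS_def)

definition Inv where
  "Inv S \<longleftrightarrow> (\<forall>n k. vS S n k = real CARD('k) * bi k (h n) (phS S n)) \<and> (\<forall>n. (\<Sum>k\<in>UNIV. uS S n k) = (\<Sum>k\<in>UNIV. vS S n k))"

lemma Inv_S0: "Inv S0"
  unfolding Inv_def S0_def vS_def uS_def phS_def by (simp add: blk_inner_def)

lemma sum_zv: "(\<Sum>k\<in>UNIV. zv S n k) = (\<Sum>l\<in>UNIV. xv S n l)"
proof -
  have "(\<Sum>k\<in>UNIV. zv S n k) = (\<Sum>k\<in>UNIV. \<Sum>l\<in>UNIV. A$l$k * xv S n l)" by (simp add: zv_eq)
  also have "\<dots> = (\<Sum>l\<in>UNIV. \<Sum>k\<in>UNIV. A$l$k * xv S n l)" by (rule sum.swap)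
  also have "\<dots> = (\<Sum>l\<in>UNIV. xv S n l)" by (simp add: sum_distrib_right[symmetric] A_stoch)
  finally show ?thesis .
qed

lemma Inv_step: assumes "Inv S" shows "Inv (astep \<mu> S n)"
proof -
  have v: "\<And>n k. vS S n k = real CARD('k) * bi k (h n) (phS S n)" and s: "\<And>n. (\<Sum>k\<in>UNIV. uS S n k) = (\<Sum>k\<in>UNIV. vS S n k)"
    using assms unfolding Inv_def by auto
  have "(\<Sum>k\<in>UNIV. zv S n k) = (\<Sum>k\<in>UNIV. real CARD('k) * bi k (h n) (wS S))"
  proof -
    have "(\<Sum>l\<in>UNIV. xv S n l) = (\<Sum>l\<in>UNIV. uS S n l) + (\<Sum>l\<in>UNIV. real CARD('k) * bi l (h n) (wS S)) - (\<Sum>l\<in>UNIV. vS S n l)"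
      unfolding xv_def by (simp add: sum.distrib sum_subtractf)
    then show ?thesis using sum_zv[of S n] s[of n] by simp
  qed
  then show ?thesis unfolding Inv_def astep_u astep_v astep_ph using v s by auto
qed

lemma Inv_arun: "Inv (foldl (astep \<mu>) S xs)" if "Inv S"
  using that by (induction xs arbitrary: S) (simp, metis Inv_step foldl_Cons)

end



lemma lam_split:
  fixes l a b :: real
  assumes "0 < l" "l < 1"
  shows "l^2 * (a + b)^2 \<le> l * a^2 + b^2 / (1 - l)"
proof -
  have "(1 - l) * (l * a^2 + b^2 / (1 - l)) - (1 - l) * (l^2 * (a + b)^2)
        = l * ((1 - l) * a - l * b)^2 + b^2 * (1 - l^2)"
    using assms by (simp add: field_simps power2_eq_square)
  also have "\<dots> \<ge> 0" using assms by (intro add_nonneg_nonneg mult_nonneg_nonneg) (auto simp: power_le_one abs_square_le_1)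
  finally have "(1 - l) * (l^2 * (a + b)^2) \<le> (1 - l) * (l * a^2 + b^2 / (1 - l))" by simp
  then show ?thesis using assms by simp
qed

lemma sq_sum_le: "(x + y)^2 \<le> 2 * x^2 + 2 * (y::real)^2"
  using young_real[of 1 x y] by simp

lemma avg_sq:
  fixes f :: "nat \<Rightarrow> 'a::real_normed_vector"
  assumes "N > 0"
  shows "(norm ((1 / real N) *\<^sub>R (\<Sum>m<N. f m)))^2 \<le> (1 / real N) * (\<Sum>m<N. (norm (f m))^2)"
proof -
  have "norm (\<Sum>m<N. f m) \<le> (\<Sum>m<N. norm (f m))" by (rule norm_sum)
  then have "(norm (\<Sum>m<N. f m))^2 \<le> (\<Sum>m<N. norm (f m))^2" by (simp add: power_mono)
  also have "\<dots> \<le> (\<Sum>m<N. (norm (f m))^2) * real N"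
    using sum_squared_le_sum_of_squares[of "\<lambda>m. norm (f m)" "{..<N}"] by simp
  finally have *: "(norm (\<Sum>m<N. f m))^2 \<le> (\<Sum>m<N. (norm (f m))^2) * real N" .
  have "(norm ((1 / real N) *\<^sub>R (\<Sum>m<N. f m)))^2 = (norm (\<Sum>m<N. f m))^2 / (real N)^2"
    by (simp add: power_divide)
  also have "\<dots> \<le> (\<Sum>m<N. (norm (f m))^2) * real N / (real N)^2"
    using * by (simp add: divide_right_mono)
  also have "\<dots> = (1 / real N) * (\<Sum>m<N. (norm (f m))^2)"
    using assms by (simp add: power2_eq_square)
  finally show ?thesis .
qed

lemma blockscale:
  fixes blk :: "'m::finite \<Rightarrow> 'k::finite"
  shows "(norm (\<chi> j. c (blk j) * (v::real^'m)$j))^2 \<le> (\<Sum>k\<in>UNIV. (c k)^2) * (norm v)^2"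
proof -
  have "(norm (\<chi> j. c (blk j) * v$j))^2 = (\<Sum>j\<in>UNIV. (c (blk j))^2 * (v$j)^2)"
    by (simp add: norm2_vec power_mult_distrib)
  also have "\<dots> \<le> (\<Sum>j\<in>UNIV. (\<Sum>k\<in>UNIV. (c k)^2) * (v$j)^2)"
  proof (intro sum_mono mult_right_mono)
    fix j show "(c (blk j))^2 \<le> (\<Sum>k\<in>UNIV. (c k)^2)"
      by (rule member_le_sum) auto
  qed auto
  also have "\<dots> = (\<Sum>k\<in>UNIV. (c k)^2) * (norm v)^2"
    by (simp add: norm2_vec sum_distrib_left)
  finally show ?thesis .
qed

lemma avg_center:
  fixes f :: "nat \<Rightarrow> 'a::real_inner"
  assumes "N > 0"
  shows "(\<Sum>n<N. (norm (f n - (1 / real N) *\<^sub>R (\<Sum>m<N. f m)))^2) \<le> (\<Sum>n<N. (norm (f n))^2)"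
proof -
  define c where "c = (1 / real N) *\<^sub>R (\<Sum>m<N. f m)"
  have sc: "(\<Sum>m<N. f m) = real N *\<^sub>R c" unfolding c_def using assms by simp
  have "(\<Sum>n<N. (norm (f n - c))^2) = (\<Sum>n<N. (norm (f n))^2 - 2 * (f n \<bullet> c) + (norm c)^2)"
    by (intro sum.cong refl) (simp add: power2_norm_eq_inner inner_diff_left inner_diff_right inner_commute algebra_simps)
  also have "\<dots> = (\<Sum>n<N. (norm (f n))^2) - 2 * ((\<Sum>n<N. f n) \<bullet> c) + real N * (norm c)^2"
    by (simp add: sum.distrib sum_subtractf inner_sum_left sum_distrib_left)
  also have "\<dots> = (\<Sum>n<N. (norm (f n))^2) - real N * (norm c)^2"
    unfolding sc by (simp add: power2_norm_eq_inner)
  also have "\<dots> \<le> (\<Sum>n<N. (norm (f n))^2)" by simp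
  finally show ?thesis unfolding c_def .
qed

context vrd begin

definition "pS S m = h m \<bullet> phS S m"
definition "ut S m k = uS S m k - pS S m"
definition "qS S n = h n \<bullet> wS S"

lemma cons_step:
  assumes inv: "Inv S"
  shows "(\<Sum>k\<in>UNIV. (zv S n k - qS S n)^2) \<le> lam * (\<Sum>k\<in>UNIV. (ut S n k)^2)
      + (2 * real CARD('k)^3 + 2 * real CARD('k)) * (norm (h n))^2 / (1 - lam) * (norm (wS S - phS S n))^2"
proof -
  let ?K = "real CARD('k)"
  have v: "\<And>n k. vS S n k = ?K * bi k (h n) (phS S n)" and s: "\<And>n. (\<Sum>k\<in>UNIV. uS S n k) = (\<Sum>k\<in>UNIV. vS S n k)"
    using inv unfolding Inv_def by auto
  define d where "d = wS S - phS S n"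
  define y :: "real^'k" where "y = (\<chi> l. xv S n l - qS S n)"
  define a :: "real^'k" where "a = (\<chi> l. ut S n l)"
  define rr :: "real^'k" where "rr = (\<chi> l. ?K * bi l (h n) d - h n \<bullet> d)"
  have yar: "y = a + rr"
    unfolding y_def a_def rr_def
    by (simp add: vec_eq_iff xv_def ut_def pS_def qS_def v d_def blk_inner_diff inner_diff_right algebra_simps)
  have sumy: "(\<Sum>l\<in>UNIV. y$l) = 0"
  proof -
    have "(\<Sum>l\<in>UNIV. xv S n l) = (\<Sum>l\<in>UNIV. uS S n l) + ?K * (\<Sum>l\<in>UNIV. bi l (h n) (wS S)) - (\<Sum>l\<in>UNIV. vS S n l)"
      unfolding xv_def by (simp add: sum.distrib sum_subtractf sum_distrib_left)
    also have "\<dots> = ?K * qS S n" using s[of n] by (simp add: qS_def inner_blocks[symmetric])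
    finally show ?thesis unfolding y_def by (simp add: sum_subtractf)
  qed
  have Ay: "(A *v y)$k = zv S n k - qS S n" for k
  proof -
    have "(A *v y)$k = (\<Sum>l\<in>UNIV. A$l$k * (xv S n l - qS S n))"
      by (simp add: matrix_vector_mult_def y_def A_symm[of k])
    also have "\<dots> = (\<Sum>l\<in>UNIV. A$l$k * xv S n l) - qS S n * (\<Sum>l\<in>UNIV. A$l$k)"
      by (simp add: right_diff_distrib sum_subtractf sum_distrib_left mult.commute)
    also have "\<dots> = zv S n k - qS S n" by (simp add: A_col zv_eq)
    finally show ?thesis .
  qed
  have lhs: "(\<Sum>k\<in>UNIV. (zv S n k - qS S n)^2) = (norm (A *v y))^2"
    by (simp add: norm2_vec Ay)
  have c: "norm (A *v y) \<le> lam * norm y"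
    by (rule consensus_contract[OF A_sym A_stoch lambda_def lambda_range(2) lambda_range(1) sumy])
  have "norm y \<le> norm a + norm rr" using yar norm_triangle_ineq by simp
  then have "(norm (A *v y))^2 \<le> lam^2 * (norm a + norm rr)^2"
    using c lambda_range by (smt (verit) mult_left_mono norm_ge_zero power_mono power_mult_distrib)
  also have "\<dots> \<le> lam * (norm a)^2 + (norm rr)^2 / (1 - lam)"
    by (rule lam_split[OF lambda_range])
  finally have main: "(norm (A *v y))^2 \<le> lam * (norm a)^2 + (norm rr)^2 / (1 - lam)" .
  have na: "(norm a)^2 = (\<Sum>k\<in>UNIV. (ut S n k)^2)" by (simp add: norm2_vec a_def)
  have nr: "(norm rr)^2 \<le> (2 * ?K^3 + 2 * ?K) * (norm (h n))^2 * (norm d)^2"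
  proof -
    have hd: "(h n \<bullet> d)^2 \<le> (norm (h n))^2 * (norm d)^2"
      using Cauchy_Schwarz_ineq[of "h n" d] by (simp add: power2_norm_eq_inner)
    have "(norm rr)^2 = (\<Sum>l\<in>UNIV. (?K * bi l (h n) d - h n \<bullet> d)^2)" by (simp add: norm2_vec rr_def)
    also have "\<dots> \<le> (\<Sum>l\<in>(UNIV::'k set). 2 * ?K^2 * ((norm (h n))^2 * (norm d)^2) + 2 * ((norm (h n))^2 * (norm d)^2))"
    proof (rule sum_mono)
      fix l :: 'k
      have "(?K * bi l (h n) d - h n \<bullet> d)^2 \<le> 2 * (?K * bi l (h n) d)^2 + 2 * (h n \<bullet> d)^2"
        using sq_sum_le[of "?K * bi l (h n) d" "- (h n \<bullet> d)"] by simp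
      also have "\<dots> \<le> 2 * ?K^2 * ((norm (h n))^2 * (norm d)^2) + 2 * ((norm (h n))^2 * (norm d)^2)"
      proof -
        have "(?K * bi l (h n) d)^2 \<le> ?K^2 * ((norm (h n))^2 * (norm d)^2)"
          using mult_left_mono[OF blk_inner_sq[of blk l "h n" d], of "?K^2"] by (simp add: power_mult_distrib)
        then show ?thesis using hd by linarith
      qed
      finally show "(?K * bi l (h n) d - h n \<bullet> d)^2 \<le> 2 * ?K^2 * ((norm (h n))^2 * (norm d)^2) + 2 * ((norm (h n))^2 * (norm d)^2)" .
    qed
    also have "\<dots> = (2 * ?K^3 + 2 * ?K) * (norm (h n))^2 * (norm d)^2"
      by (simp add: algebra_simps power2_eq_square power3_eq_cube)
    finally show ?thesis .
  qed
  have "(norm rr)^2 / (1 - lam) \<le> (2 * ?K^3 + 2 * ?K) * (norm (h n))^2 * (norm d)^2 / (1 - lam)"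
    using nr lambda_range by (simp add: divide_right_mono)
  then show ?thesis using main lhs na unfolding d_def by (simp add: algebra_simps)
qed

end



context vrd begin

definition "zeta S m = (dQ (h m \<bullet> wS S) (\<gamma> m) - dQ (pS S m) (\<gamma> m)) *\<^sub>R h m"
definition "zbar S = (1 / real N) *\<^sub>R (\<Sum>m<N. zeta S m)"
definition "ev S n = gv S n - gradR (wS S) - (zeta S n - zbar S)"
definition "al S n k = (dQ (zv S n k) (\<gamma> n) - dQ (qS S n) (\<gamma> n)) - (dQ (uS S n k) (\<gamma> n) - dQ (pS S n) (\<gamma> n))"
definition "be S m k = dQ (uS S m k) (\<gamma> m) - dQ (pS S m) (\<gamma> m)"
definition "H2 = 1 + (\<Sum>m<N. (norm (h m))^2)"
definition "Uf S = (\<Sum>m<N. \<Sum>k\<in>UNIV. (ut S m k)^2)"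

lemma G_comp: "(\<Sum>k\<in>UNIV. gr k w) $ j = gr (blk j) w $ j"
  by (rule gr_sum_local[where r=r and blk=blk, OF r_block r_deriv])

lemma hm_le: "m < N \<Longrightarrow> (norm (h m))^2 \<le> H2"
  unfolding H2_def using member_le_sum[of m "{..<N}" "\<lambda>m. (norm (h m))^2"] by simp

lemma H2_pos: "H2 \<ge> 1"
  unfolding H2_def by (simp add: sum_nonneg)

lemma ev_vec: "ev S n = (\<chi> j. al S n (blk j) * h n $ j) + (1 / real N) *\<^sub>R (\<Sum>m<N. (\<chi> j. be S m (blk j) * h m $ j))"
proof (subst vec_eq_iff, intro allI)
  fix j
  let ?k = "blk j"
  have g: "gv S n $ j = (dQ (zv S n ?k) (\<gamma> n) - dQ (uS S n ?k) (\<gamma> n)) * (h n)$j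
                         + (1 / real N) * (\<Sum>m<N. dQ (uS S m ?k) (\<gamma> m) * (h m)$j)
                         + (gr ?k (wS S))$j"
    unfolding gv_def by simp
  have gr: "gradR (wS S) $ j = (1 / real N) * (\<Sum>m<N. dQ (h m \<bullet> wS S) (\<gamma> m) * h m $ j) + gr ?k (wS S) $ j"
    unfolding emp_risk_grad_def using G_comp[of "wS S" j]
    by (simp add: sum_component)
  have zb: "zbar S $ j = (1 / real N) * (\<Sum>m<N. (dQ (h m \<bullet> wS S) (\<gamma> m) - dQ (pS S m) (\<gamma> m)) * h m $ j)"
    unfolding zbar_def zeta_def by (simp add: sum_component)
  have z: "zeta S n $ j = (dQ (h n \<bullet> wS S) (\<gamma> n) - dQ (pS S n) (\<gamma> n)) * h n $ j"
    unfolding zeta_def by simp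
  have r: "((\<chi> j. al S n (blk j) * h n $ j) + (1 / real N) *\<^sub>R (\<Sum>m<N. (\<chi> j. be S m (blk j) * h m $ j))) $ j
      = al S n ?k * h n $ j + (1 / real N) * (\<Sum>m<N. be S m ?k * h m $ j)"
    by (simp add: sum_component)
  have s: "(\<Sum>m<N. dQ (uS S m ?k) (\<gamma> m) * (h m)$j) - (\<Sum>m<N. dQ (h m \<bullet> wS S) (\<gamma> m) * h m $ j)
      + (\<Sum>m<N. (dQ (h m \<bullet> wS S) (\<gamma> m) - dQ (pS S m) (\<gamma> m)) * h m $ j) = (\<Sum>m<N. be S m ?k * h m $ j)"
    unfolding be_def by (simp only: sum_subtractf[symmetric] sum.distrib[symmetric]) (rule sum.cong, simp, simp add: algebra_simps)
  show "ev S n $ j = ((\<chi> j. al S n (blk j) * h n $ j) + (1 / real N) *\<^sub>R (\<Sum>m<N. (\<chi> j. be S m (blk j) * h m $ j))) $ j"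
  proof -
    have s': "(1 / real N) * (\<Sum>m<N. dQ (uS S m ?k) (\<gamma> m) * (h m)$j) - (1 / real N) * (\<Sum>m<N. dQ (h m \<bullet> wS S) (\<gamma> m) * h m $ j)
      + (1 / real N) * (\<Sum>m<N. (dQ (h m \<bullet> wS S) (\<gamma> m) - dQ (pS S m) (\<gamma> m)) * h m $ j) = (1 / real N) * (\<Sum>m<N. be S m ?k * h m $ j)"
      using arg_cong[OF s, of "\<lambda>x. (1 / real N) * x"] by (simp only: distrib_left right_diff_distrib)
    show ?thesis unfolding r ev_def vector_minus_component g gr zb z
      using s' by (simp add: al_def qS_def algebra_simps)
  qed
qed

lemma ev_bound:
  assumes inv: "Inv S" and n: "n < N"
  shows "(norm (ev S n))^2 \<le> 4 * \<delta>^2 * H2 * ((\<Sum>k\<in>UNIV. (zv S n k - qS S n)^2) + (\<Sum>k\<in>UNIV. (ut S n k)^2))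
           + 2 * \<delta>^2 * H2 * ((1 / real N) * Uf S)"
proof -
  define e1 :: "real^'m" where "e1 = (\<chi> j. al S n (blk j) * h n $ j)"
  define f :: "nat \<Rightarrow> real^'m" where "f m = (\<chi> j. be S m (blk j) * h m $ j)" for m
  have "(norm (ev S n))^2 \<le> (1 + 1) * (norm e1)^2 + (1 + 1/1) * (norm ((1 / real N) *\<^sub>R (\<Sum>m<N. f m)))^2"
    unfolding ev_vec e1_def f_def by (rule young) simp
  also have "\<dots> \<le> 2 * ((\<Sum>k\<in>UNIV. (al S n k)^2) * (norm (h n))^2) + 2 * ((1 / real N) * (\<Sum>m<N. (norm (f m))^2))"
    using blockscale[of "al S n" blk "h n"] avg_sq[of N f] N_pos unfolding e1_def by simp
  also have "\<dots> \<le> 2 * ((2 * \<delta>^2 * ((\<Sum>k\<in>UNIV. (zv S n k - qS S n)^2) + (\<Sum>k\<in>UNIV. (ut S n k)^2))) * H2)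
       + 2 * ((1 / real N) * (\<Sum>m<N. (\<delta>^2 * (\<Sum>k\<in>UNIV. (ut S m k)^2)) * H2))"
  proof (intro add_mono mult_left_mono mult_mono sum_mono)
    show "(\<Sum>k\<in>UNIV. (al S n k)^2) \<le> 2 * \<delta>^2 * ((\<Sum>k\<in>UNIV. (zv S n k - qS S n)^2) + (\<Sum>k\<in>UNIV. (ut S n k)^2))"
    proof -
      have "(al S n k)^2 \<le> 2 * \<delta>^2 * ((zv S n k - qS S n)^2 + (ut S n k)^2)" for k
      proof -
        have "\<bar>al S n k\<bar> \<le> \<delta> * \<bar>zv S n k - qS S n\<bar> + \<delta> * \<bar>ut S n k\<bar>"
          unfolding al_def ut_def using dQ_lip[OF n, of "zv S n k" "qS S n"] dQ_lip[OF n, of "uS S n k" "pS S n"]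
          by linarith
        then have "(al S n k)^2 \<le> (\<delta> * \<bar>zv S n k - qS S n\<bar> + \<delta> * \<bar>ut S n k\<bar>)^2"
          by (metis abs_ge_zero power2_abs power_mono)
        also have "\<dots> \<le> 2 * (\<delta> * \<bar>zv S n k - qS S n\<bar>)^2 + 2 * (\<delta> * \<bar>ut S n k\<bar>)^2" by (rule sq_sum_le)
        finally show ?thesis by (simp add: power_mult_distrib algebra_simps)
      qed
      then have "(\<Sum>k\<in>UNIV. (al S n k)^2) \<le> (\<Sum>k\<in>UNIV. 2 * \<delta>^2 * ((zv S n k - qS S n)^2 + (ut S n k)^2))"
        by (rule sum_mono)
      also have "(\<Sum>k\<in>UNIV. 2 * \<delta>^2 * ((zv S n k - qS S n)^2 + (ut S n k)^2))
         = 2 * \<delta>^2 * ((\<Sum>k\<in>UNIV. (zv S n k - qS S n)^2) + (\<Sum>k\<in>UNIV. (ut S n k)^2))"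
        by (simp only: sum_distrib_left[symmetric] sum.distrib)
      finally show ?thesis .
    qed
  next
    show "(norm (h n))^2 \<le> H2" by (rule hm_le[OF n])
  next
    fix m assume m: "m \<in> {..<N}"
    have "(norm (f m))^2 \<le> (\<Sum>k\<in>UNIV. (be S m k)^2) * (norm (h m))^2"
      unfolding f_def by (rule blockscale)
    also have "\<dots> \<le> (\<delta>^2 * (\<Sum>k\<in>UNIV. (ut S m k)^2)) * H2"
    proof (intro mult_mono)
      have "(be S m k)^2 \<le> \<delta>^2 * (ut S m k)^2" for k
      proof -
        have "\<bar>be S m k\<bar> \<le> \<delta> * \<bar>ut S m k\<bar>" unfolding be_def ut_def using dQ_lip m by simp
        then have "(be S m k)^2 \<le> (\<delta> * \<bar>ut S m k\<bar>)^2" by (metis abs_ge_zero power2_abs power_mono)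
        then show ?thesis by (simp add: power_mult_distrib)
      qed
      then show "(\<Sum>k\<in>UNIV. (be S m k)^2) \<le> \<delta>^2 * (\<Sum>k\<in>UNIV. (ut S m k)^2)"
        by (simp add: sum_distrib_left sum_mono)
    qed (use hm_le m in \<open>simp_all add: sum_nonneg\<close>)
    finally show "(norm (f m))^2 \<le> (\<delta>^2 * (\<Sum>k\<in>UNIV. (ut S m k)^2)) * H2" .
  qed (use N_pos H2_pos in \<open>auto intro!: mult_nonneg_nonneg add_nonneg_nonneg sum_nonneg\<close>)
  also have "\<dots> = 4 * \<delta>^2 * H2 * ((\<Sum>k\<in>UNIV. (zv S n k - qS S n)^2) + (\<Sum>k\<in>UNIV. (ut S n k)^2))
           + 2 * \<delta>^2 * H2 * ((1 / real N) * Uf S)"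
    unfolding Uf_def by (simp add: sum_distrib_left sum_distrib_right algebra_simps)
  finally show ?thesis .
qed

end



lemma norm3_sq: "(norm (x + y + z::'a::real_normed_vector))^2 \<le> 3 * (norm x)^2 + 3 * (norm y)^2 + 3 * (norm z)^2"
proof -
  have "norm (x + y + z) \<le> norm x + norm y + norm z" by (metis norm_triangle_ineq order_trans add_right_mono)
  then have "(norm (x + y + z))^2 \<le> (norm x + norm y + norm z)^2" by (simp add: power_mono)
  also have "\<dots> \<le> 3 * (norm x)^2 + 3 * (norm y)^2 + 3 * (norm z)^2"
  proof -
    fix a b c :: real
    have g: "(a + b + c)^2 \<le> 3 * a^2 + 3 * b^2 + 3 * c^2" for a b c :: real
    proof -
      have e: "(a + b + c)^2 = a^2 + b^2 + c^2 + 2*a*b + 2*b*c + 2*a*c" by (simp add: power2_eq_square algebra_simps)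
      have "0 \<le> (a - b)^2" "0 \<le> (b - c)^2" "0 \<le> (a - c)^2" by simp_all
      moreover have "(a - b)^2 = a^2 - 2*a*b + b^2" "(b - c)^2 = b^2 - 2*b*c + c^2" "(a - c)^2 = a^2 - 2*a*c + c^2"
        by (simp_all add: power2_eq_square algebra_simps)
      ultimately show ?thesis using e by linarith
    qed
    show ?thesis by (rule g)
  qed
  finally show ?thesis .
qed

context vrd begin

definition "Xf S = (norm (wS S - wstar))^2"
definition "Df S = (1 / real N) * (\<Sum>m<N. (norm (wS S - phS S m))^2)"
definition "cRb = (2 * real CARD('k)^3 + 2 * real CARD('k)) * H2"
definition "E1 = 10 * \<delta>^2 * H2 + 4 * \<delta>^2 * H2 * cRb / (1 - lam)"

lemma cRb_nonneg: "cRb \<ge> 0" unfolding cRb_def using H2_pos by simp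

lemma gv_dec: "gv S n = gradR (wS S) + (zeta S n - zbar S) + ev S n"
  unfolding ev_def by simp

lemma sum_xi: "(\<Sum>n<N. zeta S n - zbar S) = 0"
proof -
  have "(\<Sum>n<N. zbar S) = real N *\<^sub>R zbar S" by (simp only: sum_constant_scaleR card_lessThan)
  also have "\<dots> = (\<Sum>n<N. zeta S n)" unfolding zbar_def using N_pos by simp
  finally show ?thesis by (simp add: sum_subtractf)
qed

lemma zeta_bound: "n < N \<Longrightarrow> (norm (zeta S n))^2 \<le> L^2 * (norm (wS S - phS S n))^2"
proof -
  assume n: "n < N"
  have "norm (zeta S n) \<le> L * norm (wS S - phS S n)"
    unfolding zeta_def pS_def using Q_lip[OF n, of "wS S" "phS S n"] by (simp add: scaleR_diff_left)
  then show ?thesis using L_pos by (metis norm_ge_zero power_mono power_mult_distrib)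
qed

lemma xi_sum_bound: "(\<Sum>n<N. (norm (zeta S n - zbar S))^2) \<le> L^2 * (real N * Df S)"
proof -
  have "(\<Sum>n<N. (norm (zeta S n - zbar S))^2) \<le> (\<Sum>n<N. (norm (zeta S n))^2)"
    unfolding zbar_def by (rule avg_center) (use N_pos in simp)
  also have "\<dots> \<le> (\<Sum>n<N. L^2 * (norm (wS S - phS S n))^2)" by (rule sum_mono) (simp add: zeta_bound)
  also have "\<dots> = L^2 * (real N * Df S)" unfolding Df_def using N_pos by (simp add: sum_distrib_left)
  finally show ?thesis .
qed

lemma ev_avg:
  assumes inv: "Inv S"
  shows "(1 / real N) * (\<Sum>n<N. (norm (ev S n))^2) \<le> E1 * ((1 / real N) * Uf S + Df S)"
proof -
  have b: "(norm (ev S n))^2 \<le> 8 * \<delta>^2 * H2 * (\<Sum>k\<in>UNIV. (ut S n k)^2)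
     + 4 * \<delta>^2 * H2 * (cRb / (1 - lam)) * (norm (wS S - phS S n))^2 + 2 * \<delta>^2 * H2 * ((1 / real N) * Uf S)"
    if n: "n < N" for n
  proof -
    have c: "(\<Sum>k\<in>UNIV. (zv S n k - qS S n)^2) \<le> lam * (\<Sum>k\<in>UNIV. (ut S n k)^2) + cRb / (1 - lam) * (norm (wS S - phS S n))^2"
    proof -
      have "(2 * real CARD('k)^3 + 2 * real CARD('k)) * (norm (h n))^2 / (1 - lam) \<le> cRb / (1 - lam)"
        unfolding cRb_def using hm_le[OF n] lambda_range by (intro divide_right_mono mult_left_mono) auto
      then show ?thesis using cons_step[OF inv, of n] by (smt (verit) mult_right_mono zero_le_power2)
    qed
    have s: "(\<Sum>k\<in>UNIV. (zv S n k - qS S n)^2) + (\<Sum>k\<in>UNIV. (ut S n k)^2) \<le> 2 * (\<Sum>k\<in>UNIV. (ut S n k)^2) + cRb / (1 - lam) * (norm (wS S - phS S n))^2"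
    proof -
      have "lam * (\<Sum>k\<in>UNIV. (ut S n k)^2) \<le> 1 * (\<Sum>k\<in>UNIV. (ut S n k)^2)"
        using lambda_range by (intro mult_right_mono) (auto intro: sum_nonneg)
      then show ?thesis using c by simp
    qed
    have "4 * \<delta>^2 * H2 * ((\<Sum>k\<in>UNIV. (zv S n k - qS S n)^2) + (\<Sum>k\<in>UNIV. (ut S n k)^2))
        \<le> 4 * \<delta>^2 * H2 * (2 * (\<Sum>k\<in>UNIV. (ut S n k)^2) + cRb / (1 - lam) * (norm (wS S - phS S n))^2)"
      using s H2_pos by (intro mult_left_mono) auto
    then show ?thesis using ev_bound[OF inv n] by (simp add: algebra_simps)
  qed
  have "(\<Sum>n<N. (norm (ev S n))^2) \<le> (\<Sum>n<N. 8 * \<delta>^2 * H2 * (\<Sum>k\<in>UNIV. (ut S n k)^2)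
     + 4 * \<delta>^2 * H2 * (cRb / (1 - lam)) * (norm (wS S - phS S n))^2 + 2 * \<delta>^2 * H2 * ((1 / real N) * Uf S))"
    by (rule sum_mono) (use b in auto)
  also have "\<dots> = 8 * \<delta>^2 * H2 * Uf S + 4 * \<delta>^2 * H2 * (cRb / (1 - lam)) * (real N * Df S) + 2 * \<delta>^2 * H2 * Uf S"
    unfolding Uf_def Df_def using N_pos by (simp add: sum.distrib sum_distrib_left)
  finally have "(1 / real N) * (\<Sum>n<N. (norm (ev S n))^2) \<le> (1 / real N) * (8 * \<delta>^2 * H2 * Uf S + 4 * \<delta>^2 * H2 * (cRb / (1 - lam)) * (real N * Df S) + 2 * \<delta>^2 * H2 * Uf S)"
    using N_pos by (simp add: divide_right_mono)
  also have "\<dots> = 10 * \<delta>^2 * H2 * ((1 / real N) * Uf S) + (4 * \<delta>^2 * H2 * cRb / (1 - lam)) * Df S"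
    using N_pos by (simp add: field_simps)
  also have "\<dots> \<le> E1 * ((1 / real N) * Uf S + Df S)"
  proof -
    have U0: "Uf S \<ge> 0" unfolding Uf_def by (auto intro!: sum_nonneg)
    have D0: "Df S \<ge> 0" unfolding Df_def by (intro mult_nonneg_nonneg sum_nonneg) auto
    have c0: "4 * \<delta>^2 * H2 * cRb / (1 - lam) \<ge> 0" using cRb_nonneg H2_pos lambda_range by simp
    have c1: "10 * \<delta>^2 * H2 \<ge> 0" using H2_pos by simp
    have "E1 * ((1 / real N) * Uf S + Df S) - (10 * \<delta>^2 * H2 * ((1 / real N) * Uf S) + (4 * \<delta>^2 * H2 * cRb / (1 - lam)) * Df S)
      = (4 * \<delta>^2 * H2 * cRb / (1 - lam)) * ((1 / real N) * Uf S) + (10 * \<delta>^2 * H2) * Df S"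
    proof -
      have gen: "(t + c2) * (x + d) - (t * x + c2 * d) = c2 * x + t * d" for t c2 x d :: real
        by (simp add: algebra_simps)
      show ?thesis unfolding E1_def by (rule gen)
    qed
    also have "\<dots> \<ge> 0" using U0 D0 c0 c1 N_pos H2_pos by (intro add_nonneg_nonneg mult_nonneg_nonneg) auto
    finally show ?thesis by simp
  qed
  finally show ?thesis .
qed

end



lemma sum_upd: "finite A \<Longrightarrow> n \<in> A \<Longrightarrow> (\<Sum>m\<in>A. if m = n then z else f m) = sum f A - f n + (z::real)"
proof -
  assume fa: "finite A" and n: "n \<in> A"
  have "(\<Sum>m\<in>A. if m = n then z else f m) = (if n = n then z else f n) + (\<Sum>m\<in>A - {n}. if m = n then z else f m)"
    by (rule sum.remove[OF fa n])
  also have "(\<Sum>m\<in>A - {n}. if m = n then z else f m) = (\<Sum>m\<in>A - {n}. f m)" by (rule sum.cong) auto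
  also have "(\<Sum>m\<in>A - {n}. f m) = sum f A - f n" using sum.remove[OF fa n, of f] by simp
  finally show ?thesis by simp
qed

context vrd begin

lemma cons_step':
  assumes inv: "Inv S" and n: "n < N"
  shows "(\<Sum>k\<in>UNIV. (zv S n k - qS S n)^2) \<le> lam * (\<Sum>k\<in>UNIV. (ut S n k)^2) + cRb / (1 - lam) * (norm (wS S - phS S n))^2"
proof -
  have "(2 * real CARD('k)^3 + 2 * real CARD('k)) * (norm (h n))^2 / (1 - lam) \<le> cRb / (1 - lam)"
    unfolding cRb_def using hm_le[OF n] lambda_range by (intro divide_right_mono mult_left_mono) auto
  then show ?thesis using cons_step[OF inv, of n] by (smt (verit) mult_right_mono zero_le_power2)
qed

lemma Uf_nonneg: "Uf S \<ge> 0" unfolding Uf_def by (auto intro!: sum_nonneg)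
lemma Df_nonneg: "Df S \<ge> 0" unfolding Df_def by (intro mult_nonneg_nonneg sum_nonneg) auto
lemma Xf_nonneg: "Xf S \<ge> 0" unfolding Xf_def by simp

lemma Ustep:
  assumes inv: "Inv S"
  shows "(1 / real N) * (\<Sum>n<N. Uf (astep \<mu> S n)) \<le> (1 - (1 - lam) / real N) * Uf S + cRb / (1 - lam) * Df S"
proof -
  have each: "Uf (astep \<mu> S n) \<le> Uf S - (1 - lam) * (\<Sum>k\<in>UNIV. (ut S n k)^2) + cRb / (1 - lam) * (norm (wS S - phS S n))^2"
    if n: "n < N" for n
  proof -
    have u: "ut (astep \<mu> S n) m k = (if m = n then zv S n k - qS S n else ut S m k)" for m k
      unfolding ut_def pS_def qS_def astep_u astep_ph by simp
    have "Uf (astep \<mu> S n) = (\<Sum>m<N. if m = n then (\<Sum>k\<in>UNIV. (zv S n k - qS S n)^2) else (\<Sum>k\<in>UNIV. (ut S m k)^2))"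
      unfolding Uf_def u by (intro sum.cong refl) auto
    also have "\<dots> = Uf S - (\<Sum>k\<in>UNIV. (ut S n k)^2) + (\<Sum>k\<in>UNIV. (zv S n k - qS S n)^2)"
      unfolding Uf_def by (rule sum_upd) (use n in auto)
    finally show ?thesis using cons_step'[OF inv n] by (simp add: algebra_simps)
  qed
  have "(\<Sum>n<N. Uf (astep \<mu> S n)) \<le> (\<Sum>n<N. Uf S - (1 - lam) * (\<Sum>k\<in>UNIV. (ut S n k)^2) + cRb / (1 - lam) * (norm (wS S - phS S n))^2)"
    by (rule sum_mono) (use each in auto)
  also have "\<dots> = real N * Uf S - (1 - lam) * Uf S + cRb / (1 - lam) * (real N * Df S)"
    unfolding Uf_def Df_def using N_pos by (simp add: sum.distrib sum_subtractf sum_distrib_left)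
  finally have "(1 / real N) * (\<Sum>n<N. Uf (astep \<mu> S n)) \<le> (1 / real N) * (real N * Uf S - (1 - lam) * Uf S + cRb / (1 - lam) * (real N * Df S))"
    using N_pos by (simp add: divide_right_mono)
  also have "\<dots> = (1 - (1 - lam) / real N) * Uf S + cRb / (1 - lam) * Df S"
    using N_pos by (simp add: field_simps)
  finally show ?thesis .
qed

lemma Dstep:
  assumes mu: "0 \<le> \<mu>"
  shows "(1 / real N) * (\<Sum>n<N. Df (astep \<mu> S n)) \<le> (1 - 1 / (2 * real N)) * Df S + 3 * real N * \<mu>^2 * ((1 / real N) * (\<Sum>n<N. (norm (gv S n))^2))"
proof -
  define t where "t = 1 / (2 * real N)"
  have t0: "t > 0" unfolding t_def using N_pos by simp
  let ?w = "wS S" and ?ph = "phS S"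
  have each: "Df (astep \<mu> S n) \<le> (1 + t) * Df S + (1 + 1/t) * \<mu>^2 * (norm (gv S n))^2 - (1 + t) / real N * (norm (?w - ?ph n))^2"
    if n: "n < N" for n
  proof -
    have b: "(norm (wS (astep \<mu> S n) - phS (astep \<mu> S n) m))^2 \<le>
        ((1 + t) * (norm (?w - ?ph m))^2 + (1 + 1/t) * (\<mu>^2 * (norm (gv S n))^2)) - (if m = n then (1 + t) * (norm (?w - ?ph n))^2 else 0)" for m
    proof (cases "m = n")
      case True
      have "(norm (wS (astep \<mu> S n) - phS (astep \<mu> S n) m))^2 = \<mu>^2 * (norm (gv S n))^2"
        using True unfolding astep_w astep_ph by (simp add: power_mult_distrib)
      also have "\<dots> \<le> (1 + 1/t) * (\<mu>^2 * (norm (gv S n))^2)"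
      proof -
        have "0 \<le> (1/t) * (\<mu>^2 * (norm (gv S n))^2)" using t0 by simp
        then show ?thesis by (simp add: distrib_right)
      qed
      finally show ?thesis using True by simp
    next
      case False
      have "(norm (wS (astep \<mu> S n) - phS (astep \<mu> S n) m))^2 = (norm ((?w - ?ph m) + (- (\<mu> *\<^sub>R gv S n))))^2"
        using False unfolding astep_w astep_ph by (simp add: algebra_simps)
      also have "\<dots> \<le> (1 + t) * (norm (?w - ?ph m))^2 + (1 + 1/t) * (norm (- (\<mu> *\<^sub>R gv S n)))^2"
        by (rule young[OF t0])
      finally show ?thesis using False mu by (simp add: power_mult_distrib)
    qed
    have "(\<Sum>m<N. (norm (wS (astep \<mu> S n) - phS (astep \<mu> S n) m))^2)
       \<le> (\<Sum>m<N. ((1 + t) * (norm (?w - ?ph m))^2 + (1 + 1/t) * (\<mu>^2 * (norm (gv S n))^2)) - (if m = n then (1 + t) * (norm (?w - ?ph n))^2 else 0))"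
      by (rule sum_mono) (rule b)
    also have "\<dots> = (1 + t) * (\<Sum>m<N. (norm (?w - ?ph m))^2) + real N * ((1 + 1/t) * (\<mu>^2 * (norm (gv S n))^2)) - (1 + t) * (norm (?w - ?ph n))^2"
      using n by (simp add: sum_subtractf sum.distrib sum_distrib_left)
    finally have "(1 / real N) * (\<Sum>m<N. (norm (wS (astep \<mu> S n) - phS (astep \<mu> S n) m))^2)
       \<le> (1 / real N) * ((1 + t) * (\<Sum>m<N. (norm (?w - ?ph m))^2) + real N * ((1 + 1/t) * (\<mu>^2 * (norm (gv S n))^2)) - (1 + t) * (norm (?w - ?ph n))^2)"
      using N_pos by (simp add: divide_right_mono)
    also have "\<dots> = (1 + t) * Df S + (1 + 1/t) * \<mu>^2 * (norm (gv S n))^2 - (1 + t) / real N * (norm (?w - ?ph n))^2"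
      unfolding Df_def using N_pos by (simp add: field_simps)
    finally show ?thesis unfolding Df_def[of "astep \<mu> S n"] .
  qed
  have "(\<Sum>n<N. Df (astep \<mu> S n)) \<le> (\<Sum>n<N. (1 + t) * Df S + (1 + 1/t) * \<mu>^2 * (norm (gv S n))^2 - (1 + t) / real N * (norm (?w - ?ph n))^2)"
    by (rule sum_mono) (use each in auto)
  also have "\<dots> = real N * ((1 + t) * Df S) + (1 + 1/t) * \<mu>^2 * (\<Sum>n<N. (norm (gv S n))^2) - (1 + t) * Df S"
    unfolding Df_def using N_pos by (simp add: sum.distrib sum_subtractf sum_distrib_left)
  finally have "(1 / real N) * (\<Sum>n<N. Df (astep \<mu> S n)) \<le> (1 / real N) * (real N * ((1 + t) * Df S) + (1 + 1/t) * \<mu>^2 * (\<Sum>n<N. (norm (gv S n))^2) - (1 + t) * Df S)"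
    using N_pos by (simp add: divide_right_mono)
  also have "\<dots> = ((1 + t) * (1 - 1 / real N)) * Df S + (1 + 1/t) * \<mu>^2 * ((1 / real N) * (\<Sum>n<N. (norm (gv S n))^2))"
    using N_pos by (simp add: field_simps)
  also have "\<dots> \<le> (1 - 1 / (2 * real N)) * Df S + 3 * real N * \<mu>^2 * ((1 / real N) * (\<Sum>n<N. (norm (gv S n))^2))"
  proof (intro add_mono mult_right_mono)
    show "(1 + t) * (1 - 1 / real N) \<le> 1 - 1 / (2 * real N)"
      unfolding t_def using N_pos by (simp add: field_simps)
    show "1 + 1/t \<le> 3 * real N"
      unfolding t_def using N_pos by simp
  qed (auto simp: Df_nonneg intro!: sum_nonneg divide_nonneg_nonneg)
  finally show ?thesis .
qed

end



context vrd begin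

lemma gradR_sq: "(norm (gradR w))^2 \<le> (L + \<eta>)^2 * (norm (w - wstar))^2"
  using grad_bound[of w] by (metis norm_ge_zero power_mono power_mult_distrib)

lemma gv_avg:
  shows "(1 / real N) * (\<Sum>n<N. (norm (gv S n))^2) \<le> 3 * (L + \<eta>)^2 * Xf S + 3 * L^2 * Df S + 3 * ((1 / real N) * (\<Sum>n<N. (norm (ev S n))^2))"
proof -
  have "(\<Sum>n<N. (norm (gv S n))^2) \<le> (\<Sum>n<N. 3 * (norm (gradR (wS S)))^2 + 3 * (norm (zeta S n - zbar S))^2 + 3 * (norm (ev S n))^2)"
    unfolding gv_dec by (rule sum_mono) (rule norm3_sq)
  also have "\<dots> = real N * (3 * (norm (gradR (wS S)))^2) + 3 * (\<Sum>n<N. (norm (zeta S n - zbar S))^2) + 3 * (\<Sum>n<N. (norm (ev S n))^2)"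
    by (simp add: sum.distrib sum_distrib_left)
  also have "\<dots> \<le> real N * (3 * ((L + \<eta>)^2 * Xf S)) + 3 * (L^2 * (real N * Df S)) + 3 * (\<Sum>n<N. (norm (ev S n))^2)"
    using gradR_sq[of "wS S"] xi_sum_bound[of S] unfolding Xf_def by (intro add_mono mult_left_mono) auto
  finally have "(1 / real N) * (\<Sum>n<N. (norm (gv S n))^2) \<le> (1 / real N) * (real N * (3 * ((L + \<eta>)^2 * Xf S)) + 3 * (L^2 * (real N * Df S)) + 3 * (\<Sum>n<N. (norm (ev S n))^2))"
    using N_pos by (simp add: divide_right_mono)
  also have "\<dots> = 3 * (L + \<eta>)^2 * Xf S + 3 * L^2 * Df S + 3 * ((1 / real N) * (\<Sum>n<N. (norm (ev S n))^2))"
    using N_pos by (simp add: field_simps)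
  finally show ?thesis .
qed

lemma Xstep:
  assumes mu: "0 < \<mu>" and mn: "\<mu> * \<nu> \<le> 1"
  shows "(1 / real N) * (\<Sum>n<N. Xf (astep \<mu> S n)) \<le> (1 - \<mu> * \<nu> + 2 * \<mu>^2 * (L + \<eta>)^2) * Xf S + 2 * \<mu>^2 * L^2 * Df S
      + (2 * \<mu> / \<nu>) * ((1 / real N) * (\<Sum>n<N. (norm (ev S n))^2))"
proof -
  define t where "t = \<mu> * \<nu>"
  have t0: "t > 0" unfolding t_def using mu nu_pos by simp
  define a where "a = wS S - wstar - \<mu> *\<^sub>R gradR (wS S)"
  define xi where "xi n = zeta S n - zbar S" for n
  have each: "Xf (astep \<mu> S n) \<le> (1 + t) * (norm (a - \<mu> *\<^sub>R xi n))^2 + (1 + 1/t) * (\<mu>^2 * (norm (ev S n))^2)" for n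
  proof -
    have "Xf (astep \<mu> S n) = (norm ((a - \<mu> *\<^sub>R xi n) + (- (\<mu> *\<^sub>R ev S n))))^2"
      unfolding Xf_def astep_w gv_dec a_def xi_def by (simp add: algebra_simps)
    also have "\<dots> \<le> (1 + t) * (norm (a - \<mu> *\<^sub>R xi n))^2 + (1 + 1/t) * (norm (- (\<mu> *\<^sub>R ev S n)))^2"
      by (rule young[OF t0])
    finally show ?thesis using mu by (simp add: power_mult_distrib)
  qed
  have sq: "(\<Sum>n<N. (norm (a - \<mu> *\<^sub>R xi n))^2) = real N * (norm a)^2 - 2 * \<mu> * (a \<bullet> (\<Sum>n<N. xi n)) + \<mu>^2 * (\<Sum>n<N. (norm (xi n))^2)"
  proof -
    have "(norm (a - \<mu> *\<^sub>R xi n))^2 = (norm a)^2 - 2 * \<mu> * (a \<bullet> xi n) + \<mu>^2 * (norm (xi n))^2" for n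
      by (simp only: power2_norm_eq_inner) (simp add: inner_diff_left inner_diff_right inner_commute algebra_simps power2_eq_square)
    then show ?thesis by (simp add: sum.distrib sum_subtractf sum_distrib_left inner_sum_right)
  qed
  have sxi: "(\<Sum>n<N. xi n) = 0" unfolding xi_def by (rule sum_xi)
  have "(\<Sum>n<N. Xf (astep \<mu> S n)) \<le> (\<Sum>n<N. (1 + t) * (norm (a - \<mu> *\<^sub>R xi n))^2 + (1 + 1/t) * (\<mu>^2 * (norm (ev S n))^2))"
    by (rule sum_mono) (rule each)
  also have "\<dots> = (1 + t) * (real N * (norm a)^2 + \<mu>^2 * (\<Sum>n<N. (norm (xi n))^2)) + (1 + 1/t) * \<mu>^2 * (\<Sum>n<N. (norm (ev S n))^2)"
  proof -
    have sq': "(\<Sum>n<N. (norm (a - \<mu> *\<^sub>R xi n))^2) = real N * (norm a)^2 + \<mu>^2 * (\<Sum>n<N. (norm (xi n))^2)"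
      using sq sxi by simp
    show ?thesis by (simp only: sum.distrib sum_distrib_left[symmetric] sq' mult.assoc)
  qed
  also have "\<dots> \<le> (1 + t) * (real N * ((1 - 2 * \<mu> * \<nu> + \<mu>^2 * (L + \<eta>)^2) * Xf S) + \<mu>^2 * (L^2 * (real N * Df S))) + (1 + 1/t) * \<mu>^2 * (\<Sum>n<N. (norm (ev S n))^2)"
  proof -
    have "(norm a)^2 \<le> (1 - 2 * \<mu> * \<nu> + \<mu>^2 * (L + \<eta>)^2) * Xf S"
      unfolding a_def Xf_def using gd_contract[of \<mu> "wS S"] mu by simp
    moreover have "(\<Sum>n<N. (norm (xi n))^2) \<le> L^2 * (real N * Df S)" unfolding xi_def by (rule xi_sum_bound)
    ultimately show ?thesis using t0 by (intro add_mono mult_left_mono) auto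
  qed
  finally have "(1 / real N) * (\<Sum>n<N. Xf (astep \<mu> S n)) \<le> (1 / real N) * ((1 + t) * (real N * ((1 - 2 * \<mu> * \<nu> + \<mu>^2 * (L + \<eta>)^2) * Xf S) + \<mu>^2 * (L^2 * (real N * Df S))) + (1 + 1/t) * \<mu>^2 * (\<Sum>n<N. (norm (ev S n))^2))"
    using N_pos by (simp add: divide_right_mono)
  also have "\<dots> = ((1 + t) * (1 - 2 * \<mu> * \<nu> + \<mu>^2 * (L + \<eta>)^2)) * Xf S + ((1 + t) * \<mu>^2 * L^2) * Df S
      + ((1 + 1/t) * \<mu>^2) * ((1 / real N) * (\<Sum>n<N. (norm (ev S n))^2))"
    using N_pos by (simp add: field_simps)
  also have "\<dots> \<le> (1 - \<mu> * \<nu> + 2 * \<mu>^2 * (L + \<eta>)^2) * Xf S + 2 * \<mu>^2 * L^2 * Df S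
      + (2 * \<mu> / \<nu>) * ((1 / real N) * (\<Sum>n<N. (norm (ev S n))^2))"
  proof (intro add_mono mult_right_mono)
    have t1: "t \<le> 1" unfolding t_def using mn by simp
    define s where "s = \<mu>^2 * (L + \<eta>)^2"
    have s0: "s \<ge> 0" unfolding s_def by simp
    have "(1 + t) * (1 - 2 * t + s) = 1 - t - 2 * t^2 + s + t * s" by (simp add: algebra_simps power2_eq_square)
    also have "\<dots> \<le> 1 - t + 2 * s" using t1 s0 t0 mult_left_le_one_le[OF s0, of t] by (smt (verit) zero_le_power2)
    finally show "(1 + t) * (1 - 2 * \<mu> * \<nu> + \<mu>^2 * (L + \<eta>)^2) \<le> 1 - \<mu> * \<nu> + 2 * \<mu>^2 * (L + \<eta>)^2"
      unfolding s_def t_def by (simp add: algebra_simps)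
    show "1 + t \<le> 2" using t1 by simp
    have "(1 + 1/t) * \<mu>^2 = \<mu>^2 + \<mu> / \<nu>" unfolding t_def using mu nu_pos by (simp add: field_simps power2_eq_square)
    also have "\<dots> \<le> 2 * \<mu> / \<nu>"
    proof -
      have "\<mu>^2 \<le> \<mu> / \<nu>" using mn mu nu_pos by (simp add: field_simps power2_eq_square)
      then show ?thesis by simp
    qed
    finally show "(1 + 1/t) * \<mu>^2 \<le> 2 * \<mu> / \<nu>" .
  qed (auto simp: Xf_nonneg Df_nonneg intro!: sum_nonneg divide_nonneg_nonneg)
  finally show ?thesis .
qed

end



lemma lin_combine:
  fixes X D U Xn Dn Uq a b \<rho> cXX cXD cXU cDX cDD cDU cUD cUU :: real
  assumes "Xn \<le> cXX*X + cXD*D + cXU*U" "Dn \<le> cDX*X + cDD*D + cDU*U" "Uq \<le> cUD*D + cUU*U"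
    "a \<ge> 0" "b \<ge> 0" "X \<ge> 0" "D \<ge> 0" "U \<ge> 0"
    "cXX + a*cDX \<le> \<rho>" "cXD + a*cDD + b*cUD \<le> \<rho>*a" "cXU + a*cDU + b*cUU \<le> \<rho>*b"
  shows "Xn + a*Dn + b*Uq \<le> \<rho>*(X + a*D + b*U)"
proof -
  have "a*Dn \<le> a*(cDX*X + cDD*D + cDU*U)" by (rule mult_left_mono) (use assms in auto)
  moreover have "b*Uq \<le> b*(cUD*D + cUU*U)" by (rule mult_left_mono) (use assms in auto)
  ultimately have "Xn + a*Dn + b*Uq \<le> cXX*X + cXD*D + cXU*U + a*(cDX*X + cDD*D + cDU*U) + b*(cUD*D + cUU*U)"
    using assms(1) by linarith
  also have "\<dots> = (cXX + a*cDX)*X + (cXD + a*cDD + b*cUD)*D + (cXU + a*cDU + b*cUU)*U"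
    by (simp add: algebra_simps)
  also have "\<dots> \<le> \<rho>*X + (\<rho>*a)*D + (\<rho>*b)*U"
    using assms(6-11) by (intro add_mono mult_right_mono) auto
  finally show ?thesis by (simp add: algebra_simps)
qed

context vrd begin

definition "LR = L + \<eta>"
definition "betac = 8 * E1 / (\<nu> * (1 - lam))"
definition "alphac = (4 * real N / lam) * (2 * E1 / \<nu> + betac * cRb / (1 - lam) + 1)"
definition "ca = 9 * alphac * real N"
definition "mubar = min 1 (min (1 / \<nu>) (min (1 / (2 * L^2)) (min (\<nu> / (8 * LR^2))
     (min (2 / (\<nu> * ca)) (min (1 / (ca * (L^2 + E1))) (\<nu> / (4 * ca * LR^2)))))))"
definition "rho \<mu> = max (1 - (1 - lam) / (2 * real N)) (1 - \<mu> * \<nu> / 4)"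
definition "Vf \<mu> S = Xf S + (\<mu> * alphac) * Df S + (\<mu> * betac) * Uf S"

lemma E1_pos: "E1 > 0"
proof -
  have "10 * \<delta>^2 * H2 > 0" using delta_pos H2_pos by simp
  moreover have "4 * \<delta>^2 * H2 * cRb / (1 - lam) \<ge> 0" using H2_pos cRb_nonneg lambda_range by simp
  ultimately show ?thesis unfolding E1_def by linarith
qed

lemma LR_pos: "LR > 0" unfolding LR_def using L_pos eta_nonneg by simp
lemma betac_pos: "betac > 0" unfolding betac_def using E1_pos nu_pos lambda_range by simp
lemma alphac_pos: "alphac > 0"
proof -
  have "2 * E1 / \<nu> + betac * cRb / (1 - lam) + 1 > 0"
    using E1_pos nu_pos betac_pos cRb_nonneg lambda_range by (smt (verit) divide_nonneg_pos mult_nonneg_nonneg)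
  then show ?thesis unfolding alphac_def using N_pos lambda_range by simp
qed
lemma ca_pos: "ca > 0" unfolding ca_def using alphac_pos N_pos by simp

lemma LE_pos: "L^2 + E1 > 0" using E1_pos by (smt (verit) zero_le_power2)

lemma mubar_pos: "mubar > 0"
  unfolding mubar_def using nu_pos L_pos LR_pos ca_pos E1_pos LE_pos by simp

lemma rho_pos: "rho \<mu> > 0"
proof -
  have "1 - (1 - lam) / (2 * real N) > 0"
  proof -
    have "(1 - lam) / (2 * real N) \<le> (1 - lam) / 2" using N_pos lambda_range by (intro divide_left_mono) auto
    moreover have "\<And>x l::real. x \<le> (1 - l) / 2 \<Longrightarrow> 0 < l \<Longrightarrow> 0 < 1 - x" by (simp add: field_simps)
    ultimately show ?thesis using lambda_range by blast
  qed
  then show ?thesis unfolding rho_def by simp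
qed

lemma step_contract:
  assumes inv: "Inv S" and mu: "0 < \<mu>" "\<mu> \<le> mubar"
  shows "(1 / real N) * (\<Sum>n<N. Vf \<mu> (astep \<mu> S n)) \<le> rho \<mu> * Vf \<mu> S"
proof -
  have m1: "\<mu> \<le> 1" and m2: "\<mu> \<le> 1 / \<nu>" and m3: "\<mu> \<le> 1 / (2 * L^2)" and m4: "\<mu> \<le> \<nu> / (8 * LR^2)"
    and m5: "\<mu> \<le> 2 / (\<nu> * ca)" and m6: "\<mu> \<le> 1 / (ca * (L^2 + E1))" and m7: "\<mu> \<le> \<nu> / (4 * ca * LR^2)"
    using mu(2) unfolding mubar_def by simp_all
  have mn: "\<mu> * \<nu> \<le> 1" using m2 nu_pos by (simp add: field_simps)
  have k3: "2 * \<mu> * L^2 \<le> 1" using m3 L_pos by (simp add: field_simps)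
  have k4: "2 * \<mu> * LR^2 \<le> \<nu> / 4" using m4 LR_pos by (simp add: field_simps)
  have musq: "\<mu>^2 \<le> \<mu>" using m1 mu(1) by (simp add: power2_eq_square mult_left_le_one_le)
  have k5: "ca * \<mu>^2 \<le> 2 / \<nu>"
  proof -
    have "ca * \<mu> \<le> 2 / \<nu>" using m5 ca_pos nu_pos by (simp add: field_simps)
    moreover have "ca * \<mu>^2 \<le> ca * \<mu>" using musq ca_pos by simp
    ultimately show ?thesis by linarith
  qed
  have k6: "ca * \<mu>^2 * (L^2 + E1) \<le> 1"
  proof -
    have p: "ca * (L^2 + E1) > 0" using ca_pos LE_pos by simp
    have "ca * (L^2 + E1) * \<mu> \<le> 1" using m6 p by (simp add: field_simps)
    moreover have "ca * (L^2 + E1) * \<mu>^2 \<le> ca * (L^2 + E1) * \<mu>" using mult_left_mono[OF musq, of "ca * (L^2 + E1)"] p by linarith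
    ultimately show ?thesis by (simp add: algebra_simps)
  qed
  have k7: "ca * \<mu>^2 * LR^2 \<le> \<nu> / 4"
  proof -
    have p: "ca * LR^2 > 0" using ca_pos LR_pos by simp
    have "ca * LR^2 * \<mu> \<le> \<nu> / 4" using m7 p by (simp add: field_simps)
    moreover have "ca * LR^2 * \<mu>^2 \<le> ca * LR^2 * \<mu>" using mult_left_mono[OF musq, of "ca * LR^2"] p by linarith
    ultimately show ?thesis by (simp add: algebra_simps)
  qed
  define X where "X = Xf S"
  define D where "D = Df S"
  define U where "U = Uf S"
  define Ee where "Ee = (1 / real N) * (\<Sum>n<N. (norm (ev S n))^2)"
  define Gg where "Gg = (1 / real N) * (\<Sum>n<N. (norm (gv S n))^2)"
  define Xn where "Xn = (1 / real N) * (\<Sum>n<N. Xf (astep \<mu> S n))"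
  define Dn where "Dn = (1 / real N) * (\<Sum>n<N. Df (astep \<mu> S n))"
  define Uq where "Uq = (1 / real N) * (\<Sum>n<N. Uf (astep \<mu> S n))"
  define a where "a = \<mu> * alphac"
  define b where "b = \<mu> * betac"
  have X0: "X \<ge> 0" "D \<ge> 0" "U \<ge> 0" unfolding X_def D_def U_def by (simp_all add: Xf_nonneg Df_nonneg Uf_nonneg)
  have a0: "a \<ge> 0" "b \<ge> 0" unfolding a_def b_def using mu alphac_pos betac_pos by simp_all
  have Ee_b: "Ee \<le> E1 * ((1 / real N) * U + D)" unfolding Ee_def U_def D_def by (rule ev_avg[OF inv])
  have Gg_b: "Gg \<le> 3 * LR^2 * X + 3 * L^2 * D + 3 * Ee" unfolding Gg_def X_def D_def Ee_def LR_def by (rule gv_avg)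
  have Xn_b0: "Xn \<le> (1 - \<mu> * \<nu> + 2 * \<mu>^2 * LR^2) * X + 2 * \<mu>^2 * L^2 * D + (2 * \<mu> / \<nu>) * Ee"
    unfolding Xn_def X_def D_def Ee_def LR_def by (rule Xstep[OF mu(1) mn])
  have Dn_b0: "Dn \<le> (1 - 1 / (2 * real N)) * D + 3 * real N * \<mu>^2 * Gg"
    unfolding Dn_def D_def Gg_def using Dstep mu by simp
  have Uq_b: "Uq \<le> (cRb / (1 - lam)) * D + (1 - (1 - lam) / real N) * U"
    unfolding Uq_def D_def U_def using Ustep[OF inv] by (simp add: algebra_simps)
  have c1: "(2 * \<mu> / \<nu>) * Ee \<le> (2 * \<mu> / \<nu>) * (E1 * ((1 / real N) * U + D))"
    using Ee_b mu nu_pos by (intro mult_left_mono) auto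
  have Xn_b: "Xn \<le> (1 - \<mu> * \<nu> + 2 * \<mu>^2 * LR^2) * X + (2 * \<mu>^2 * L^2 + (2 * \<mu> / \<nu>) * E1) * D + ((2 * \<mu> / \<nu>) * E1 / real N) * U"
    using Xn_b0 c1 by (simp add: algebra_simps)
  have c2: "3 * real N * \<mu>^2 * Gg \<le> 3 * real N * \<mu>^2 * (3 * LR^2 * X + 3 * L^2 * D + 3 * (E1 * ((1 / real N) * U + D)))"
  proof -
    have "Gg \<le> 3 * LR^2 * X + 3 * L^2 * D + 3 * (E1 * ((1 / real N) * U + D))" using Gg_b Ee_b by linarith
    then show ?thesis using N_pos by (intro mult_left_mono) auto
  qed
  have Dn_b: "Dn \<le> (9 * real N * \<mu>^2 * LR^2) * X + (1 - 1 / (2 * real N) + 9 * real N * \<mu>^2 * (L^2 + E1)) * D + (9 * \<mu>^2 * E1) * U"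
  proof -
    have "3 * real N * \<mu>^2 * (3 * LR^2 * X + 3 * L^2 * D + 3 * (E1 * ((1 / real N) * U + D)))
        = (9 * real N * \<mu>^2 * LR^2) * X + (9 * real N * \<mu>^2 * (L^2 + E1)) * D + (9 * \<mu>^2 * E1) * U"
      using N_pos by (simp add: field_simps)
    then show ?thesis using Dn_b0 c2 by (simp add: algebra_simps)
  qed
  have r1: "1 - (1 - lam) / (2 * real N) \<le> rho \<mu>" and r2: "1 - \<mu> * \<nu> / 4 \<le> rho \<mu>" unfolding rho_def by simp_all
  have CX: "(1 - \<mu> * \<nu> + 2 * \<mu>^2 * LR^2) + a * (9 * real N * \<mu>^2 * LR^2) \<le> rho \<mu>"
  proof -
    have e1: "2 * \<mu>^2 * LR^2 \<le> \<mu> * (\<nu> / 4)"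
    proof -
      have "\<mu> * (2 * \<mu> * LR^2) \<le> \<mu> * (\<nu> / 4)" using k4 mu by (intro mult_left_mono) auto
      then show ?thesis by (simp add: power2_eq_square algebra_simps)
    qed
    have e2: "a * (9 * real N * \<mu>^2 * LR^2) \<le> \<mu> * (\<nu> / 4)"
    proof -
      have "a * (9 * real N * \<mu>^2 * LR^2) = \<mu> * (ca * \<mu>^2 * LR^2)" unfolding a_def ca_def by (simp add: algebra_simps)
      also have "\<dots> \<le> \<mu> * (\<nu> / 4)" using k7 mu by (intro mult_left_mono) auto
      finally show ?thesis .
    qed
    have "\<mu> * \<nu> \<ge> 0" using mu nu_pos by simp
    then show ?thesis using e1 e2 r2 by (simp add: algebra_simps)
  qed
  have CU: "(2 * \<mu> / \<nu>) * E1 / real N + a * (9 * \<mu>^2 * E1) + b * (1 - (1 - lam) / real N) \<le> rho \<mu> * b"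
  proof -
    have bb: "b * ((1 - lam) / (2 * real N)) = 4 * \<mu> * E1 / (\<nu> * real N)"
      unfolding b_def betac_def using lambda_range nu_pos N_pos by (simp add: field_simps)
    have e: "a * (9 * \<mu>^2 * E1) \<le> 2 * \<mu> * E1 / (\<nu> * real N)"
    proof -
      have "a * (9 * \<mu>^2 * E1) = (\<mu> * E1 / real N) * (ca * \<mu>^2)" unfolding a_def ca_def using N_pos by (simp add: field_simps)
      also have "\<dots> \<le> (\<mu> * E1 / real N) * (2 / \<nu>)" using k5 mu E1_pos N_pos by (intro mult_left_mono) auto
      also have "\<dots> = 2 * \<mu> * E1 / (\<nu> * real N)" by (simp add: field_simps)
      finally show ?thesis .
    qed
    have "(2 * \<mu> / \<nu>) * E1 / real N = 2 * \<mu> * E1 / (\<nu> * real N)" by (simp add: field_simps)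
    moreover have "rho \<mu> * b \<ge> (1 - (1 - lam) / (2 * real N)) * b" using r1 a0 by (intro mult_right_mono) auto
    moreover have "(1 - (1 - lam) / (2 * real N)) * b = b * (1 - (1 - lam) / real N) + b * ((1 - lam) / (2 * real N))"
      by (simp add: field_simps)
    ultimately show ?thesis using e bb by linarith
  qed
  have CD: "(2 * \<mu>^2 * L^2 + (2 * \<mu> / \<nu>) * E1) + a * (1 - 1 / (2 * real N) + 9 * real N * \<mu>^2 * (L^2 + E1)) + b * (cRb / (1 - lam)) \<le> rho \<mu> * a"
  proof -
    define P where "P = 2 * E1 / \<nu> + betac * cRb / (1 - lam)"
    have P0: "P \<ge> 0" unfolding P_def using E1_pos nu_pos betac_pos cRb_nonneg lambda_range by simp
    have aa: "a * (lam / (2 * real N)) = \<mu> * (2 * P + 2)"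
      unfolding a_def alphac_def P_def using lambda_range N_pos by (simp add: field_simps)
    have t1: "2 * \<mu>^2 * L^2 \<le> \<mu> * 1"
    proof -
      have "\<mu> * (2 * \<mu> * L^2) \<le> \<mu> * 1" using k3 mu by (intro mult_left_mono) auto
      then show ?thesis by (simp add: power2_eq_square algebra_simps)
    qed
    have t2: "a * (9 * real N * \<mu>^2 * (L^2 + E1)) \<le> \<mu> * 1"
    proof -
      have "a * (9 * real N * \<mu>^2 * (L^2 + E1)) = \<mu> * (ca * \<mu>^2 * (L^2 + E1))" unfolding a_def ca_def by (simp add: algebra_simps)
      also have "\<dots> \<le> \<mu> * 1" using k6 mu by (intro mult_left_mono) auto
      finally show ?thesis .
    qed
    have t3: "(2 * \<mu> / \<nu>) * E1 + b * (cRb / (1 - lam)) = \<mu> * P"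
      unfolding b_def P_def by (simp add: field_simps)
    have "rho \<mu> * a \<ge> (1 - (1 - lam) / (2 * real N)) * a" using r1 a0 by (intro mult_right_mono) auto
    moreover have "(1 - (1 - lam) / (2 * real N)) * a = a * (1 - 1 / (2 * real N)) + a * (lam / (2 * real N))"
      by (simp add: diff_divide_distrib algebra_simps)
    moreover have "\<mu> * P \<ge> 0" using P0 mu by simp
    ultimately show ?thesis using aa t1 t2 t3 by (simp add: algebra_simps)
  qed
  have "Xn + a * Dn + b * Uq \<le> rho \<mu> * (X + a * D + b * U)"
    by (rule lin_combine[OF Xn_b Dn_b Uq_b a0 X0 CX CD CU])
  moreover have "(1 / real N) * (\<Sum>n<N. Vf \<mu> (astep \<mu> S n)) = Xn + a * Dn + b * Uq"
    unfolding Vf_def Xn_def Dn_def Uq_def a_def b_def by (simp add: sum.distrib sum_distrib_left algebra_simps)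
  moreover have "Vf \<mu> S = X + a * D + b * U" unfolding Vf_def X_def D_def U_def a_def b_def by simp
  ultimately show ?thesis by simp
qed

end



context vrd begin

definition "Lset i = {xs. length xs = i \<and> set xs \<subseteq> {..<N}}"

lemma Lset_fin: "finite (Lset i)"
  unfolding Lset_def using finite_lists_length_eq[of "{..<N}" i] by (simp add: conj_commute)

lemma Lset_Suc: "Lset (Suc i) = (\<lambda>(xs, n). xs @ [n]) ` (Lset i \<times> {..<N})"
proof (intro equalityI subsetI)
  fix ys assume "ys \<in> Lset (Suc i)"
  then have ys: "length ys = Suc i" "set ys \<subseteq> {..<N}" unfolding Lset_def by auto
  then have ne: "ys \<noteq> []" by auto
  have "ys = butlast ys @ [last ys]" using ne by simp
  moreover have "butlast ys \<in> Lset i" using ys unfolding Lset_def by (auto dest: in_set_butlastD)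
  moreover have "last ys \<in> {..<N}" using ys ne last_in_set by blast
  ultimately show "ys \<in> (\<lambda>(xs, n). xs @ [n]) ` (Lset i \<times> {..<N})" by force
next
  fix ys assume "ys \<in> (\<lambda>(xs, n). xs @ [n]) ` (Lset i \<times> {..<N})"
  then show "ys \<in> Lset (Suc i)" unfolding Lset_def by auto
qed

lemma Lset_Suc_sum: "(\<Sum>xs\<in>Lset (Suc i). F xs) = (\<Sum>xs\<in>Lset i. \<Sum>n<N. F (xs @ [n]))"
proof -
  have inj: "inj_on (\<lambda>(xs, n). xs @ [n]) (Lset i \<times> {..<N})"
    by (auto simp: inj_on_def)
  have "(\<Sum>xs\<in>Lset (Suc i). F xs) = (\<Sum>p\<in>Lset i \<times> {..<N}. F ((\<lambda>(xs, n). xs @ [n]) p))"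
    unfolding Lset_Suc by (simp add: sum.reindex[OF inj] comp_def)
  also have "\<dots> = (\<Sum>xs\<in>Lset i. \<Sum>n<N. F (xs @ [n]))"
    by (subst sum.cartesian_product) (simp add: case_prod_beta)
  finally show ?thesis .
qed

lemma arun_snoc: "arun \<mu> (xs @ [n]) = astep \<mu> (arun \<mu> xs) n"
  unfolding arun_def by simp

lemma Inv_arun': "Inv (arun \<mu> xs)"
  unfolding arun_def by (rule Inv_arun[OF Inv_S0])

lemma V_S0: "Vf \<mu> S0 = (norm wstar)^2"
  unfolding Vf_def Xf_def Df_def Uf_def ut_def pS_def S0_def wS_def phS_def uS_def by simp

lemma Vf_ge: "0 \<le> \<mu> \<Longrightarrow> Xf S \<le> Vf \<mu> S"
  unfolding Vf_def using Df_nonneg Uf_nonneg alphac_pos betac_pos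
  by (simp add: add_nonneg_nonneg)

lemma V_bound:
  assumes mu: "0 < \<mu>" "\<mu> \<le> mubar"
  shows "(\<Sum>xs\<in>Lset i. Vf \<mu> (arun \<mu> xs)) \<le> (real N * rho \<mu>)^i * (norm wstar)^2"
proof (induction i)
  case 0
  have "Lset 0 = {[]}" unfolding Lset_def by auto
  then show ?case using V_S0[of \<mu>] by (simp add: arun_def)
next
  case (Suc i)
  have "(\<Sum>xs\<in>Lset (Suc i). Vf \<mu> (arun \<mu> xs)) = (\<Sum>xs\<in>Lset i. \<Sum>n<N. Vf \<mu> (astep \<mu> (arun \<mu> xs) n))"
    unfolding Lset_Suc_sum arun_snoc ..
  also have "\<dots> \<le> (\<Sum>xs\<in>Lset i. real N * rho \<mu> * Vf \<mu> (arun \<mu> xs))"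
  proof (rule sum_mono)
    fix xs
    have "(1 / real N) * (\<Sum>n<N. Vf \<mu> (astep \<mu> (arun \<mu> xs) n)) \<le> rho \<mu> * Vf \<mu> (arun \<mu> xs)"
      by (rule step_contract[OF Inv_arun' mu])
    then show "(\<Sum>n<N. Vf \<mu> (astep \<mu> (arun \<mu> xs) n)) \<le> real N * rho \<mu> * Vf \<mu> (arun \<mu> xs)"
      using N_pos by (simp add: field_simps)
  qed
  also have "\<dots> = real N * rho \<mu> * (\<Sum>xs\<in>Lset i. Vf \<mu> (arun \<mu> xs))" by (simp add: sum_distrib_left)
  also have "\<dots> \<le> real N * rho \<mu> * ((real N * rho \<mu>)^i * (norm wstar)^2)"
    using Suc.IH rho_pos[of \<mu>] N_pos by (intro mult_left_mono) auto
  finally show ?case by simp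
qed

lemma msd_bound:
  assumes mu: "0 < \<mu>" "\<mu> \<le> mubar" and i: "i > 0"
  shows "vrd_msd A nbr blk N h \<gamma> dQ gr \<mu> wstar i k \<le> rho \<mu> ^ i * ((norm wstar)^2 / rho \<mu>)"
proof -
  have "(\<Sum>xs\<in>Lset (i - 1). blk_sqnorm blk k (fst (vrd_run A nbr blk N h \<gamma> dQ gr \<mu> xs) - wstar))
      \<le> (\<Sum>xs\<in>Lset (i - 1). Vf \<mu> (arun \<mu> xs))"
  proof (rule sum_mono)
    fix xs
    have "blk_sqnorm blk k (fst (vrd_run A nbr blk N h \<gamma> dQ gr \<mu> xs) - wstar) \<le> Xf (arun \<mu> xs)"
      unfolding Xf_def wS_def arun_fst[symmetric] by (rule blk_sqnorm_le)
    also have "\<dots> \<le> Vf \<mu> (arun \<mu> xs)" using mu by (intro Vf_ge) auto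
    finally show "blk_sqnorm blk k (fst (vrd_run A nbr blk N h \<gamma> dQ gr \<mu> xs) - wstar) \<le> Vf \<mu> (arun \<mu> xs)" .
  qed
  also have "\<dots> \<le> (real N * rho \<mu>)^(i - 1) * (norm wstar)^2" by (rule V_bound[OF mu])
  finally have s: "(\<Sum>xs\<in>Lset (i - 1). blk_sqnorm blk k (fst (vrd_run A nbr blk N h \<gamma> dQ gr \<mu> xs) - wstar))
      \<le> (real N * rho \<mu>)^(i - 1) * (norm wstar)^2" .
  have "vrd_msd A nbr blk N h \<gamma> dQ gr \<mu> wstar i k
      = (\<Sum>xs\<in>Lset (i - 1). blk_sqnorm blk k (fst (vrd_run A nbr blk N h \<gamma> dQ gr \<mu> xs) - wstar)) / real N ^ (i - 1)"
    unfolding vrd_msd_def Lset_def ..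
  also have "\<dots> \<le> (real N * rho \<mu>)^(i - 1) * (norm wstar)^2 / real N ^ (i - 1)"
    using s N_pos by (simp add: divide_right_mono)
  also have "\<dots> = rho \<mu> ^ (i - 1) * (norm wstar)^2"
    using N_pos by (simp add: power_mult_distrib)
  also have "\<dots> = rho \<mu> ^ i * ((norm wstar)^2 / rho \<mu>)"
  proof -
    have "rho \<mu> ^ i = rho \<mu> * rho \<mu> ^ (i - 1)" using i by (metis Suc_diff_1 power_Suc)
    then show ?thesis using rho_pos[of \<mu>] by (simp add: field_simps)
  qed
  finally show ?thesis .
qed

end


theorem corollary1:
  fixes N :: nat
    and h :: "nat \<Rightarrow> real^'m::finite"
    and \<gamma> :: "nat \<Rightarrow> real"
    and blk :: "'m \<Rightarrow> 'k::finite"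
    and Q dQ :: "real \<Rightarrow> real \<Rightarrow> real"
    and r :: "'k \<Rightarrow> real^'m \<Rightarrow> real"
    and gr :: "'k \<Rightarrow> real^'m \<Rightarrow> real^'m"
    and A :: "real^'k^'k"
    and nbr :: "'k \<Rightarrow> 'k \<Rightarrow> bool"
    and L \<delta> \<eta> \<nu> lam :: real
    and wstar :: "real^'m"
  assumes N_pos: "N \<ge> 1"
    and Q_deriv: "\<And>z g. ((\<lambda>x. Q x g) has_real_derivative dQ z g) (at z)"
    and L_pos: "L > 0" and delta_pos: "\<delta> > 0"
    and Q_lip: "\<And>n w1 w2. n < N \<Longrightarrow>
        norm (dQ (h n \<bullet> w1) (\<gamma> n) *\<^sub>R h n - dQ (h n \<bullet> w2) (\<gamma> n) *\<^sub>R h n) \<le> L * norm (w1 - w2)"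
    and dQ_lip: "\<And>n z1 z2. n < N \<Longrightarrow> \<bar>dQ z1 (\<gamma> n) - dQ z2 (\<gamma> n)\<bar> \<le> \<delta> * \<bar>z1 - z2\<bar>"
    and r_block: "\<And>k w w'. (\<And>j. blk j = k \<Longrightarrow> w$j = w'$j) \<Longrightarrow> r k w = r k w'"
    and r_deriv: "\<And>k w. (r k has_derivative (\<lambda>x. gr k w \<bullet> x)) (at w)"
    and r_convex: "convex_on UNIV (\<lambda>w. \<Sum>k\<in>UNIV. r k w)"
    and r_lip: "\<And>w1 w2. norm ((\<Sum>k\<in>UNIV. gr k w1) - (\<Sum>k\<in>UNIV. gr k w2)) \<le> \<eta> * norm (w1 - w2)"
    and nu_pos: "\<nu> > 0"
    and R_strong: "\<And>w1 w2. (emp_risk_grad N h \<gamma> dQ gr w1 - emp_risk_grad N h \<gamma> dQ gr w2) \<bullet> (w1 - w2)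
                      \<ge> \<nu> * (norm (w1 - w2))^2"
    and wstar_min: "\<And>w. emp_risk N h \<gamma> Q r wstar \<le> emp_risk N h \<gamma> Q r w"
    and A_nonneg: "\<And>l k. A$l$k \<ge> 0"
    and A_support: "\<And>l k. A$l$k > 0 \<Longrightarrow> l = k \<or> nbr l k"
    and A_sym: "transpose A = A"
    and A_stoch: "\<And>l. (\<Sum>k\<in>UNIV. A$l$k) = 1"
    and A_diag: "\<exists>k. A$k$k > 0"
    and nbr_conn: "\<And>k l. nbr\<^sup>*\<^sup>* k l"
    and lambda_def: "lam = second_largest_abs_eig A"
    and lambda_range: "0 < lam" "lam < 1"
  shows "\<exists>\<mu>bar > 0. \<forall>\<mu>. 0 < \<mu> \<and> \<mu> \<le> \<mu>bar \<longrightarrow>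
           (\<exists>C::real. \<forall>k i. i > 0 \<longrightarrow>
              vrd_msd A nbr blk N h \<gamma> dQ gr \<mu> wstar i k
                \<le> (max (1 - (1 - lam) / (2 * real N)) (1 - \<mu> * \<nu> / 4)) ^ i * C)"
proof -
  interpret vrd N h \<gamma> blk Q dQ r gr A nbr L \<delta> \<eta> \<nu> lam wstar
    by (unfold_locales; fact assms)
  have key: "\<And>\<mu> k i. 0 < \<mu> \<Longrightarrow> \<mu> \<le> mubar \<Longrightarrow> 0 < i \<Longrightarrow> vrd_msd A nbr blk N h \<gamma> dQ gr \<mu> wstar i k
                \<le> (max (1 - (1 - lam) / (2 * real N)) (1 - \<mu> * \<nu> / 4)) ^ i * ((norm wstar)^2 / rho \<mu>)"
    using msd_bound unfolding rho_def by blast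
  show ?thesis using mubar_pos key by blast
qed


end
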